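(* Assume the hypotheses of the following setting: $f:\mathbb{R}^p\to\mathbb{R}$ is three times continuously differentiable with $\mathbf{H}(\mathbf{x})=d^2f(\mathbf{x})$ positive definite for all $\mathbf{x}$; $I\subset(0,\infty)$ is an open interval on which $\mathcal{E}_\rho$ has minimizer $\mathbf{x}(\rho)$, $\rho\mapsto\mathbf{x}(\rho)$ is continuous, the index sets are constant, and the rows of $\mathbf{U}_{\mathcal{Z}}$ are linearly independent. Write $\mathbf{P}(\rho)=\mathbf{P}(\mathbf{x}(\rho))$, $\mathbf{Q}(\rho)=\mathbf{Q}(\mathbf{x}(\rho))$, $\mathbf{R}(\rho)=\mathbf{R}(\mathbf{x}(\rho))$. Then on $I$ these matrix functions are differentiable and satisfy $$D\mathbf{P}(\rho)=[\mathbf{P}(\mathbf{x})\otimes\mathbf{P}(\mathbf{x})]\cdot D\mathbf{H}(\mathbf{x})\cdot\mathbf{P}(\mathbf{x})\mathbf{u}_{\bar{\mathcal{Z}}},$$ $$D\mathbf{Q}(\rho)=[\mathbf{Q}^t(\mathbf{x})\otimes\mathbf{P}(\mathbf{x})]\cdot D\mathbf{H}(\mathbf{x})\cdot\mathbf{P}(\mathbf{x})\mathbf{u}_{\bar{\mathcal{Z}}},$$ $$D\mathbf{R}(\rho)=[\mathbf{Q}^t(\mathbf{x})\otimes\mathbf{Q}^t(\mathbf{x})]\cdot D\mathbf{H}(\mathbf{x})\cdot\mathbf{P}(\mathbf{x})\mathbf{u}_{\bar{\mathcal{Z}}},$$ where $\mathbf{x}=\mathbf{x}(\rho)$.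
   Context: Setting: $g_i(\mathbf{x})=\mathbf{v}_i^t\mathbf{x}-d_i$ ($1\le i\le r$), $h_j(\mathbf{x})=\mathbf{w}_j^t\mathbf{x}-e_j$ ($1\le j\le s$); $\mathcal{E}_\rho(\mathbf{x})=f(\mathbf{x})+\rho\sum_i|g_i(\mathbf{x})|+\rho\sum_j\max\{0,h_j(\mathbf{x})\}$. Index sets at $\mathbf{x}$: $\mathcal{N}_E=\{i:g_i(\mathbf{x})<0\}$, $\mathcal{Z}_E=\{i:g_i(\mathbf{x})=0\}$, $\mathcal{P}_E=\{i:g_i(\mathbf{x})>0\}$, $\mathcal{N}_I=\{j:h_j(\mathbf{x})<0\}$, $\mathcal{Z}_I=\{j:h_j(\mathbf{x})=0\}$, $\mathcal{P}_I=\{j:h_j(\mathbf{x})>0\}$. $\mathbf{U}_{\mathcal{Z}}$ has rows $\mathbf{v}_i^t$ ($i\in\mathcal{Z}_E$), $\mathbf{w}_j^t$ ($j\in\mathcal{Z}_I$); $\mathbf{u}_{\bar{\mathcal{Z}}}=-\sum_{i\in\mathcal{N}_E}\mathbf{v}_i+\sum_{i\in\mathcal{P}_E}\mathbf{v}_i+\sum_{j\in\mathcal{P}_I}\mathbf{w}_j$. With $\mathbf{H}=d^2f(\mathbf{x})$: $\mathbf{P}(\mathbf{x})=\mathbf{H}^{-1}-\mathbf{H}^{-1}\mathbf{U}_{\mathcal{Z}}^t[\mathbf{U}_{\mathcal{Z}}\mathbf{H}^{-1}\mathbf{U}_{\mathcal{Z}}^t]^{-1}\mathbf{U}_{\mathcal{Z}}\mathbf{H}^{-1}$,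 $\mathbf{Q}(\mathbf{x})=\mathbf{H}^{-1}\mathbf{U}_{\mathcal{Z}}^t[\mathbf{U}_{\mathcal{Z}}\mathbf{H}^{-1}\mathbf{U}_{\mathcal{Z}}^t]^{-1}$, $\mathbf{R}(\mathbf{x})=-[\mathbf{U}_{\mathcal{Z}}\mathbf{H}^{-1}\mathbf{U}_{\mathcal{Z}}^t]^{-1}$. Jacobian notation: for a matrix function $F(\mathbf{X})$, $DF(\mathbf{X})=\partial\,\mathrm{vec}F(\mathbf{X})/\partial(\mathrm{vec}\mathbf{X})^t$ (vec stacks columns); in particular $D\mathbf{P}(\rho)=d\,\mathrm{vec}\mathbf{P}(\rho)/d\rho$, and $D\mathbf{H}(\mathbf{x})=\partial\,\mathrm{vec}\,d^2f(\mathbf{x})/\partial\mathbf{x}^t$ is the $p^2\times p$ Jacobian of the Hessian. $\otimes$ is the Kronecker product. *)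

theory Defs
  imports "HOL-Analysis.Analysis"
begin

definition partial :: "'n::finite \<Rightarrow> (real^'n \<Rightarrow> real) \<Rightarrow> real^'n \<Rightarrow> real" where
  "partial m g = (\<lambda>x. frechet_derivative g (at x) (axis m 1))"

definition C3 :: "(real^'n::finite \<Rightarrow> real) \<Rightarrow> bool" where
  "C3 f \<longleftrightarrow> (\<forall>x. f differentiable at x)
     \<and> (\<forall>i x. partial i f differentiable at x)
     \<and> (\<forall>i j x. partial j (partial i f) differentiable at x)
     \<and> (\<forall>i j k. continuous_on UNIV (partial k (partial j (partial i f))))"

definition hess :: "(real^'n::finite \<Rightarrow> real) \<Rightarrow> real^'n \<Rightarrow> real^'n^'n" where
  "hess f x = (\<chi> i j. partial i (partial j f) x)"

text \<open>Generic matrices as functions of (row index, column index).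
  vec stacks columns: the entry (i,j) of A sits at position (j,i) of vec A
  (pairs ordered lexicographically, which is the column-stacking order).
  The Kronecker product uses the matching pair indexing:
  (A \<otimes> B) at row (a,c), column (b,d) equals A a b * B c d.\<close>
definition vecm :: "('a \<Rightarrow> 'b \<Rightarrow> real) \<Rightarrow> 'b \<times> 'a \<Rightarrow> real" where
  "vecm A = (\<lambda>(j,i). A i j)"

definition kron :: "('a \<Rightarrow> 'b \<Rightarrow> real) \<Rightarrow> ('c \<Rightarrow> 'd \<Rightarrow> real) \<Rightarrow> 'a \<times> 'c \<Rightarrow> 'b \<times> 'd \<Rightarrow> real" where
  "kron A B = (\<lambda>(a,c) (b,d). A a b * B c d)"

definition transm :: "('a \<Rightarrow> 'b \<Rightarrow> real) \<Rightarrow> 'b \<Rightarrow> 'a \<Rightarrow> real" where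
  "transm A = (\<lambda>j i. A i j)"

text \<open>DH(x) = d vec(d^2 f(x)) / d x^t : row (l,k) (= entry H_{kl} of vec H), column m.\<close>
definition DHess :: "(real^'n::finite \<Rightarrow> real) \<Rightarrow> real^'n \<Rightarrow> 'n \<times> 'n \<Rightarrow> 'n \<Rightarrow> real" where
  "DHess f x = (\<lambda>(l,k) m. partial m (\<lambda>y. hess f y $ k $ l) x)"

definition inv_on :: "'a set \<Rightarrow> ('a \<Rightarrow> 'a \<Rightarrow> real) \<Rightarrow> 'a \<Rightarrow> 'a \<Rightarrow> real" where
  "inv_on S A = (THE B. (\<forall>i j. (i \<notin> S \<or> j \<notin> S) \<longrightarrow> B i j = 0)
      \<and> (\<forall>i\<in>S. \<forall>j\<in>S. (\<Sum>k\<in>S. A i k * B k j) = (if i = j then 1 else 0)))"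

definition gE :: "(nat \<Rightarrow> real^'n) \<Rightarrow> (nat \<Rightarrow> real) \<Rightarrow> nat \<Rightarrow> real^'n \<Rightarrow> real" where
  "gE v d i x = v i \<bullet> x - d i"

definition hI :: "(nat \<Rightarrow> real^'n) \<Rightarrow> (nat \<Rightarrow> real) \<Rightarrow> nat \<Rightarrow> real^'n \<Rightarrow> real" where
  "hI w e j x = w j \<bullet> x - e j"

definition penalty :: "(real^'n \<Rightarrow> real) \<Rightarrow> (nat \<Rightarrow> real^'n) \<Rightarrow> (nat \<Rightarrow> real) \<Rightarrow> nat
    \<Rightarrow> (nat \<Rightarrow> real^'n) \<Rightarrow> (nat \<Rightarrow> real) \<Rightarrow> nat \<Rightarrow> real \<Rightarrow> real^'n \<Rightarrow> real" where
  "penalty f v d r w e s \<rho> x = f x + \<rho> * (\<Sum>i<r. \<bar>gE v d i x\<bar>) + \<rho> * (\<Sum>j<s. max 0 (hI w e j x))"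

definition NE where "NE v d r x = {i. i < r \<and> gE v d i x < 0}"
definition ZE where "ZE v d r x = {i. i < r \<and> gE v d i x = 0}"
definition PE where "PE v d r x = {i. i < r \<and> gE v d i x > 0}"
definition NI where "NI w e s x = {j. j < s \<and> hI w e j x < 0}"
definition ZI where "ZI w e s x = {j. j < s \<and> hI w e j x = 0}"
definition PI' where "PI' w e s x = {j. j < s \<and> hI w e j x > 0}"

text \<open>Rows of U_Z are indexed by Inl i (i in Z_E, row v_i^t) and Inr j (j in Z_I, row w_j^t).\<close>
definition Zset where "Zset v d r w e s x = Inl ` ZE v d r x \<union> Inr ` ZI w e s x"

fun urow :: "(nat \<Rightarrow> real^'n) \<Rightarrow> (nat \<Rightarrow> real^'n) \<Rightarrow> nat + nat \<Rightarrow> real^'n" where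
  "urow v w (Inl i) = v i"
| "urow v w (Inr j) = w j"

definition ubar where
  "ubar v d r w e s x = - (\<Sum>i\<in>NE v d r x. v i) + (\<Sum>i\<in>PE v d r x. v i) + (\<Sum>j\<in>PI' w e s x. w j)"

definition Ginv where
  "Ginv f v d r w e s x = (let Hi = matrix_inv (hess f x); Z = Zset v d r w e s x in
     inv_on Z (\<lambda>a b. (urow v w a v* Hi) \<bullet> urow v w b))"

definition Pmat :: "(real^'n::finite \<Rightarrow> real) \<Rightarrow> (nat \<Rightarrow> real^'n) \<Rightarrow> (nat \<Rightarrow> real) \<Rightarrow> nat
    \<Rightarrow> (nat \<Rightarrow> real^'n) \<Rightarrow> (nat \<Rightarrow> real) \<Rightarrow> nat \<Rightarrow> real^'n \<Rightarrow> 'n \<Rightarrow> 'n \<Rightarrow> real" where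
  "Pmat f v d r w e s x = (let Hi = matrix_inv (hess f x); Z = Zset v d r w e s x;
     G = Ginv f v d r w e s x in
     (\<lambda>i j. Hi $ i $ j - (\<Sum>a\<in>Z. \<Sum>b\<in>Z. (Hi *v urow v w a) $ i * G a b * (urow v w b v* Hi) $ j)))"

definition Qmat :: "(real^'n::finite \<Rightarrow> real) \<Rightarrow> (nat \<Rightarrow> real^'n) \<Rightarrow> (nat \<Rightarrow> real) \<Rightarrow> nat
    \<Rightarrow> (nat \<Rightarrow> real^'n) \<Rightarrow> (nat \<Rightarrow> real) \<Rightarrow> nat \<Rightarrow> real^'n \<Rightarrow> 'n \<Rightarrow> nat + nat \<Rightarrow> real" where
  "Qmat f v d r w e s x = (let Hi = matrix_inv (hess f x); Z = Zset v d r w e s x;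
     G = Ginv f v d r w e s x in
     (\<lambda>i a. \<Sum>b\<in>Z. (Hi *v urow v w b) $ i * G b a))"

definition Rmat :: "(real^'n::finite \<Rightarrow> real) \<Rightarrow> (nat \<Rightarrow> real^'n) \<Rightarrow> (nat \<Rightarrow> real) \<Rightarrow> nat
    \<Rightarrow> (nat \<Rightarrow> real^'n) \<Rightarrow> (nat \<Rightarrow> real) \<Rightarrow> nat \<Rightarrow> real^'n \<Rightarrow> nat + nat \<Rightarrow> nat + nat \<Rightarrow> real" where
  "Rmat f v d r w e s x = (\<lambda>a b. - Ginv f v d r w e s x a b)"

end

theory Submission
  imports Defs
begin

lemma fd_expand:
  fixes G :: "real^'n::finite \<Rightarrow> real"
  assumes "G differentiable at p"
  shows "frechet_derivative G (at p) h = (\<Sum>m\<in>UNIV. h$m * partial m G p)"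
proof -
  have lin: "linear (frechet_derivative G (at p))" using linear_frechet_derivative[OF assms] .
  have "frechet_derivative G (at p) h = frechet_derivative G (at p) (\<Sum>m\<in>UNIV. h$m *\<^sub>R axis m 1)"
    using basis_expansion[of h] by (simp add: scalar_mult_eq_scaleR)
  also have "\<dots> = (\<Sum>m\<in>UNIV. h$m * frechet_derivative G (at p) (axis m 1))"
    by (simp add: linear_sum[OF lin] linear_scale[OF lin])
  finally show ?thesis by (simp add: partial_def)
qed

lemma line_deriv:
  fixes G :: "real^'n::finite \<Rightarrow> real"
  assumes "G differentiable at (p + s *\<^sub>R q)"
  shows "((\<lambda>s. G (p + s *\<^sub>R q)) has_real_derivative frechet_derivative G (at (p + s *\<^sub>R q)) q) (at s)"
proof -
  have d1: "((\<lambda>s. p + s *\<^sub>R q) has_derivative (\<lambda>h. h *\<^sub>R q)) (at s)"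
    by (auto intro!: derivative_eq_intros)
  have d2: "(G has_derivative frechet_derivative G (at (p + s *\<^sub>R q))) (at (p + s *\<^sub>R q))"
    using frechet_derivative_works assms by blast
  have lin: "linear (frechet_derivative G (at (p + s *\<^sub>R q)))" using linear_frechet_derivative[OF assms] .
  have "((G \<circ> (\<lambda>s. p + s *\<^sub>R q)) has_derivative (frechet_derivative G (at (p + s *\<^sub>R q)) \<circ> (\<lambda>h. h *\<^sub>R q))) (at s)"
    by (rule diff_chain_at[OF d1 d2])
  moreover have "(frechet_derivative G (at (p + s *\<^sub>R q)) \<circ> (\<lambda>h. h *\<^sub>R q)) = (*) (frechet_derivative G (at (p + s *\<^sub>R q)) q)"
    by (auto simp: linear_scale[OF lin] o_def)
  ultimately show ?thesis by (simp add: has_field_derivative_def o_def)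
qed



lemma delta_approx:
  fixes F :: "real^'n::finite \<Rightarrow> real"
  assumes dF: "\<forall>y. F differentiable at y" and dP: "\<forall>y. partial i F differentiable at y"
    and e: "e > 0"
  shows "\<exists>d>0. \<forall>h. 0 < h \<and> h < d \<longrightarrow>
     \<bar>F (x + h *\<^sub>R axis j 1 + h *\<^sub>R axis i 1) - F (x + h *\<^sub>R axis j 1) - F (x + h *\<^sub>R axis i 1) + F x
        - h^2 * partial j (partial i F) x\<bar> \<le> 3 * e * h^2"
proof -
  define D where "D = frechet_derivative (partial i F) (at x)"
  have hd: "(partial i F has_derivative D) (at x)"
    unfolding D_def using frechet_derivative_works dP by blast
  have linD: "linear D" unfolding D_def using linear_frechet_derivative dP by blast
  obtain d where d: "d > 0" and dd: "\<And>y. norm (y - x) < d \<Longrightarrow>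
      norm (partial i F y - partial i F x - D (y - x)) \<le> e * norm (y - x)"
    using hd e unfolding has_derivative_at_alt by blast
  show ?thesis
  proof (intro exI[of _ "d/2"] conjI allI impI)
    show "d/2 > 0" using d by simp
    fix h :: real assume h: "0 < h \<and> h < d/2"
    define \<alpha> where "\<alpha> s = F (x + h *\<^sub>R axis j 1 + s *\<^sub>R axis i 1) - F (x + s *\<^sub>R axis i 1)" for s
    define \<alpha>' where "\<alpha>' s = partial i F (x + h *\<^sub>R axis j 1 + s *\<^sub>R axis i 1) - partial i F (x + s *\<^sub>R axis i 1)" for s
    have der: "(\<alpha> has_real_derivative \<alpha>' s) (at s)" for s
      unfolding \<alpha>_def \<alpha>'_def partial_def
      by (intro DERIV_diff line_deriv) (use dF in auto)
    obtain \<xi> where \<xi>: "0 < \<xi>" "\<xi> < h" and mv: "\<alpha> h - \<alpha> 0 = (h - 0) * \<alpha>' \<xi>"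
      using MVT2[of 0 h \<alpha> \<alpha>'] der h by blast
    have n1: "norm (h *\<^sub>R axis j 1 + \<xi> *\<^sub>R axis i 1 :: real^'n) \<le> 2*h"
    proof -
      have "norm (h *\<^sub>R axis j 1 + \<xi> *\<^sub>R axis i 1 :: real^'n) \<le> norm (h *\<^sub>R axis j 1 :: real^'n) + norm (\<xi> *\<^sub>R axis i 1 :: real^'n)"
        by (rule norm_triangle_ineq)
      also have "\<dots> = h + \<xi>" using h \<xi> by simp
      finally show ?thesis using \<xi> by simp
    qed
    have n2: "norm (\<xi> *\<^sub>R axis i 1 :: real^'n) \<le> h" using \<xi> by simp
    have y1: "x + h *\<^sub>R axis j 1 + \<xi> *\<^sub>R axis i 1 - x = h *\<^sub>R axis j 1 + \<xi> *\<^sub>R axis i 1"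
      by simp
    have b1: "\<bar>partial i F (x + h *\<^sub>R axis j 1 + \<xi> *\<^sub>R axis i 1) - partial i F x - D (h *\<^sub>R axis j 1 + \<xi> *\<^sub>R axis i 1)\<bar> \<le> e * (2*h)"
    proof -
      have "norm (x + h *\<^sub>R axis j 1 + \<xi> *\<^sub>R axis i 1 - x) < d" unfolding y1 using n1 h by linarith
      from dd[OF this] have "\<bar>partial i F (x + h *\<^sub>R axis j 1 + \<xi> *\<^sub>R axis i 1) - partial i F x - D (h *\<^sub>R axis j 1 + \<xi> *\<^sub>R axis i 1)\<bar> \<le> e * norm (h *\<^sub>R axis j 1 + \<xi> *\<^sub>R axis i 1 :: real^'n)"
        unfolding y1 real_norm_def .
      also have "\<dots> \<le> e * (2*h)" using n1 e by (intro mult_left_mono) auto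
      finally show ?thesis .
    qed
    have b2: "\<bar>partial i F (x + \<xi> *\<^sub>R axis i 1) - partial i F x - D (\<xi> *\<^sub>R axis i 1)\<bar> \<le> e * h"
    proof -
      have y2: "x + \<xi> *\<^sub>R axis i 1 - x = \<xi> *\<^sub>R axis i 1" by simp
      have "norm (x + \<xi> *\<^sub>R axis i 1 - x) < d" unfolding y2 using n2 h by linarith
      from dd[OF this] have "\<bar>partial i F (x + \<xi> *\<^sub>R axis i 1) - partial i F x - D (\<xi> *\<^sub>R axis i 1)\<bar> \<le> e * norm (\<xi> *\<^sub>R axis i 1 :: real^'n)"
        unfolding y2 real_norm_def .
      also have "\<dots> \<le> e * h" using n2 e by (intro mult_left_mono) auto
      finally show ?thesis .
    qed
    have lin: "D (h *\<^sub>R axis j 1 + \<xi> *\<^sub>R axis i 1) - D (\<xi> *\<^sub>R axis i 1) = h * partial j (partial i F) x"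
      by (simp add: linear_add[OF linD] linear_scale[OF linD]) (simp add: D_def partial_def)
    have "\<bar>\<alpha>' \<xi> - h * partial j (partial i F) x\<bar> \<le> 3 * e * h"
      using b1 b2 lin unfolding \<alpha>'_def by linarith
    then have "h * \<bar>\<alpha>' \<xi> - h * partial j (partial i F) x\<bar> \<le> h * (3 * e * h)"
      using h by (intro mult_left_mono) auto
    moreover have "h * \<bar>\<alpha>' \<xi> - h * partial j (partial i F) x\<bar> = \<bar>h * \<alpha>' \<xi> - h^2 * partial j (partial i F) x\<bar>"
    proof -
      have "h * \<alpha>' \<xi> - h^2 * partial j (partial i F) x = h * (\<alpha>' \<xi> - h * partial j (partial i F) x)"
        by (simp add: power2_eq_square algebra_simps)
      then show ?thesis using h by (simp add: abs_mult)
    qed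
    ultimately have "\<bar>h * \<alpha>' \<xi> - h^2 * partial j (partial i F) x\<bar> \<le> h * (3 * e * h)" by simp
    moreover have "\<alpha> h - \<alpha> 0 = F (x + h *\<^sub>R axis j 1 + h *\<^sub>R axis i 1) - F (x + h *\<^sub>R axis j 1) - F (x + h *\<^sub>R axis i 1) + F x"
      unfolding \<alpha>_def by simp
    ultimately show "\<bar>F (x + h *\<^sub>R axis j 1 + h *\<^sub>R axis i 1) - F (x + h *\<^sub>R axis j 1) - F (x + h *\<^sub>R axis i 1) + F x
        - h^2 * partial j (partial i F) x\<bar> \<le> 3 * e * h^2"
      using mv by (simp add: power2_eq_square mult_ac)
  qed
qed

lemma schwarz:
  fixes F :: "real^'n::finite \<Rightarrow> real"
  assumes dF: "\<forall>y. F differentiable at y" and dP: "\<forall>i y. partial i F differentiable at y"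
  shows "partial j (partial i F) x = partial i (partial j F) x"
proof (rule ccontr)
  let ?a = "partial j (partial i F) x" and ?b = "partial i (partial j F) x"
  assume ne: "?a \<noteq> ?b"
  define e where "e = \<bar>?a - ?b\<bar> / 12"
  have e: "e > 0" using ne by (simp add: e_def)
  obtain d1 where d1: "d1 > 0" "\<forall>h. 0 < h \<and> h < d1 \<longrightarrow>
     \<bar>F (x + h *\<^sub>R axis j 1 + h *\<^sub>R axis i 1) - F (x + h *\<^sub>R axis j 1) - F (x + h *\<^sub>R axis i 1) + F x
        - h^2 * ?a\<bar> \<le> 3 * e * h^2"
    using delta_approx[OF dF _ e, of i x j] dP by blast
  obtain d2 where d2: "d2 > 0" "\<forall>h. 0 < h \<and> h < d2 \<longrightarrow>
     \<bar>F (x + h *\<^sub>R axis i 1 + h *\<^sub>R axis j 1) - F (x + h *\<^sub>R axis i 1) - F (x + h *\<^sub>R axis j 1) + F x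
        - h^2 * ?b\<bar> \<le> 3 * e * h^2"
    using delta_approx[OF dF _ e, of j x i] dP by blast
  define h where "h = min d1 d2 / 2"
  have h: "0 < h" "h < d1" "h < d2" using d1 d2 by (auto simp: h_def)
  have eq: "x + h *\<^sub>R axis i 1 + h *\<^sub>R axis j 1 = x + h *\<^sub>R axis j 1 + h *\<^sub>R axis i 1"
    by (simp add: algebra_simps)
  define \<Delta> where "\<Delta> = F (x + h *\<^sub>R axis j 1 + h *\<^sub>R axis i 1) - F (x + h *\<^sub>R axis j 1) - F (x + h *\<^sub>R axis i 1) + F x"
  have q1: "\<bar>\<Delta> - h^2 * ?a\<bar> \<le> 3 * e * h^2"
    unfolding \<Delta>_def by (rule d1(2)[rule_format]) (use h in simp)
  have q2: "\<bar>\<Delta> - h^2 * ?b\<bar> \<le> 3 * e * h^2"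
  proof -
    have "\<Delta> = F (x + h *\<^sub>R axis i 1 + h *\<^sub>R axis j 1) - F (x + h *\<^sub>R axis i 1) - F (x + h *\<^sub>R axis j 1) + F x"
      unfolding \<Delta>_def eq by simp
    moreover have "\<bar>F (x + h *\<^sub>R axis i 1 + h *\<^sub>R axis j 1) - F (x + h *\<^sub>R axis i 1) - F (x + h *\<^sub>R axis j 1) + F x
        - h^2 * ?b\<bar> \<le> 3 * e * h^2" by (rule d2(2)[rule_format]) (use h in simp)
    ultimately show ?thesis by simp
  qed
  have "(\<Delta> - h^2 * ?b) - (\<Delta> - h^2 * ?a) = h^2 * (?a - ?b)" by (simp add: algebra_simps)
  then have "h^2 * \<bar>?a - ?b\<bar> = \<bar>(\<Delta> - h^2 * ?b) - (\<Delta> - h^2 * ?a)\<bar>"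
    by (simp add: abs_mult)
  also have "\<dots> \<le> \<bar>\<Delta> - h^2 * ?b\<bar> + \<bar>\<Delta> - h^2 * ?a\<bar>" by (rule abs_triangle_ineq4)
  also have "\<dots> \<le> 6 * e * h^2" using q1 q2 by simp
  finally have "h^2 * \<bar>?a - ?b\<bar> \<le> h^2 * (6 * e)" by (simp add: mult_ac)
  then have "\<bar>?a - ?b\<bar> \<le> 6 * e" using h by (simp add: mult_le_cancel_left_pos)
  then show False using e ne unfolding e_def by simp
qed



definition mb :: "real^'n::finite^'m::finite \<Rightarrow> real" where
  "mb A = (\<Sum>i\<in>UNIV. \<Sum>j\<in>UNIV. \<bar>A$i$j\<bar>)"

lemma mvbound:
  fixes A :: "real^'n::finite^'n"
  shows "\<bar>z \<bullet> (A *v w)\<bar> \<le> mb A * norm z * norm w"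
proof -
  have "\<bar>z \<bullet> (A *v w)\<bar> = \<bar>\<Sum>i\<in>UNIV. \<Sum>j\<in>UNIV. z$i * A$i$j * w$j\<bar>"
    by (simp add: inner_vec_def matrix_vector_mult_def sum_distrib_left mult_ac)
  also have "\<dots> \<le> (\<Sum>i\<in>UNIV. \<Sum>j\<in>UNIV. \<bar>z$i * A$i$j * w$j\<bar>)"
    by (rule order_trans[OF sum_abs], rule sum_mono, rule sum_abs)
  also have "\<dots> \<le> (\<Sum>i\<in>UNIV. \<Sum>j\<in>UNIV. \<bar>A$i$j\<bar> * (norm z * norm w))"
  proof (intro sum_mono)
    fix i j
    have "\<bar>z$i\<bar> * \<bar>w$j\<bar> \<le> norm z * norm w"
      by (intro mult_mono component_le_norm_cart) auto
    then show "\<bar>z$i * A$i$j * w$j\<bar> \<le> \<bar>A$i$j\<bar> * (norm z * norm w)"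
    proof -
      have "\<bar>A$i$j\<bar> * (\<bar>z$i\<bar> * \<bar>w$j\<bar>) \<le> \<bar>A$i$j\<bar> * (norm z * norm w)"
        using \<open>\<bar>z$i\<bar> * \<bar>w$j\<bar> \<le> norm z * norm w\<close> by (intro mult_left_mono) auto
      then show ?thesis by (simp add: abs_mult mult_ac)
    qed
  qed
  also have "\<dots> = (\<Sum>i\<in>UNIV. \<Sum>j\<in>UNIV. \<bar>A$i$j\<bar>) * (norm z * norm w)"
    by (simp add: sum_distrib_right)
  also have "\<dots> = mb A * norm z * norm w"
    by (simp add: mb_def)
  finally show ?thesis .
qed

lemma mb_le:
  fixes A :: "real^'n::finite^'m::finite"
  assumes "\<forall>i j. \<bar>A$i$j\<bar> \<le> K"
  shows "mb A \<le> real CARD('m) * real CARD('n) * K"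
proof -
  have "mb A \<le> (\<Sum>i\<in>(UNIV::'m set). \<Sum>j\<in>(UNIV::'n set). K)"
    unfolding mb_def using assms by (intro sum_mono) auto
  then show ?thesis by (simp add: mult_ac)
qed

lemma mb_nonneg: "mb A \<ge> 0"
  unfolding mb_def by (intro sum_nonneg) auto

lemma deriv_ev:
  fixes f :: "real \<Rightarrow> real"
  assumes "(f has_real_derivative D) (at r)" "\<eta> > 0"
  shows "eventually (\<lambda>t. \<bar>f t - f r - (t - r) * D\<bar> \<le> \<eta> * \<bar>t - r\<bar>) (at r)"
proof -
  have "(f has_derivative (\<lambda>h. h * D)) (at r within UNIV)"
    using assms(1) unfolding has_field_derivative_def by (simp add: mult.commute[of _ D])
  from has_derivative_within_alt2[THEN iffD1, OF this]
  have E: "\<forall>e>0. eventually (\<lambda>y. norm (f y - f r - (y - r) * D) \<le> e * norm (y - r)) (at r)"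
    by (rule conjunct2)
  from E[rule_format, OF assms(2)] show ?thesis by (simp only: real_norm_def)
qed

lemma l1_bound:
  fixes v :: "real^'n::finite"
  assumes "\<forall>i. \<bar>v$i\<bar> \<le> K"
  shows "norm v \<le> real CARD('n) * K"
proof -
  have "norm v \<le> (\<Sum>i\<in>UNIV. \<bar>v$i\<bar>)" by (rule norm_le_l1_cart)
  also have "\<dots> \<le> (\<Sum>i\<in>(UNIV::'n set). K)" using assms by (intro sum_mono) auto
  finally show ?thesis by simp
qed



lemma solve_deriv:
  fixes M :: "real \<Rightarrow> real^'n::finite^'n" and y b :: "real \<Rightarrow> real^'n" and M' :: "real^'n^'n"
  assumes T: "open T" "\<rho> \<in> T" and K: "subspace K"
    and yK: "\<forall>t\<in>T. y t - y \<rho> \<in> K"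
    and eq: "\<forall>t\<in>T. \<forall>z\<in>K. z \<bullet> (M t *v y t) = z \<bullet> b t"
    and Md: "\<forall>i j. ((\<lambda>t. M t $ i $ j) has_real_derivative M' $ i $ j) (at \<rho>)"
    and bd: "\<forall>i. ((\<lambda>t. b t $ i) has_real_derivative b' $ i) (at \<rho>)"
    and c: "c > 0" and coer: "\<forall>z\<in>K. c * (norm z)^2 \<le> z \<bullet> (M \<rho> *v z)"
    and y'K: "y' \<in> K" and y'eq: "\<forall>z\<in>K. z \<bullet> (M \<rho> *v y') = z \<bullet> (b' - M' *v y \<rho>)"
  shows "(y has_derivative (\<lambda>h. h *\<^sub>R y')) (at \<rho>)"
  unfolding has_derivative_within_alt2
proof (intro conjI allI impI)
  show "bounded_linear (\<lambda>h. h *\<^sub>R y')" by (rule bounded_linear_scaleR_left)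
  fix \<epsilon> :: real assume \<epsilon>: "\<epsilon> > 0"
  define N where "N = real CARD('n)"
  have N: "N > 0" unfolding N_def by simp
  define C0 where "C0 = 1 + norm (y \<rho>) + norm y'"
  have C0: "C0 > 0" unfolding C0_def by (smt (verit) norm_ge_zero)
  define \<eta> where "\<eta> = \<epsilon> * c / (2 * C0)"
  have \<eta>: "\<eta> > 0" unfolding \<eta>_def using \<epsilon> c C0 by simp
  define \<delta>0 where "\<delta>0 = min (c/2) \<eta>"
  have \<delta>0: "\<delta>0 > 0" "\<delta>0 \<le> c/2" "\<delta>0 \<le> \<eta>" unfolding \<delta>0_def using c \<eta> by auto
  have E1: "eventually (\<lambda>t. \<forall>i. \<bar>b t $ i - b \<rho> $ i - (t - \<rho>) * b' $ i\<bar> \<le> (\<eta> / N) * \<bar>t - \<rho>\<bar>) (at \<rho>)"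
    by (intro eventually_all_finite deriv_ev[OF bd[rule_format]]) (use \<eta> N in simp)
  have E2: "eventually (\<lambda>t. \<forall>i j. \<bar>M t $ i $ j - M \<rho> $ i $ j - (t - \<rho>) * M' $ i $ j\<bar> \<le> (\<eta> / (N*N)) * \<bar>t - \<rho>\<bar>) (at \<rho>)"
    by (intro eventually_all_finite deriv_ev[OF Md[rule_format]]) (use \<eta> N in simp)
  have E3: "eventually (\<lambda>t. \<forall>i j. \<bar>M t $ i $ j - M \<rho> $ i $ j\<bar> \<le> \<delta>0 / (N*N)) (at \<rho>)"
  proof (intro eventually_all_finite)
    fix i j
    have "((\<lambda>t. M t $ i $ j) \<longlongrightarrow> M \<rho> $ i $ j) (at \<rho>)"
      using DERIV_isCont[OF Md[rule_format, of i j]] by (simp add: isCont_def)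
    moreover have "\<delta>0 / (N*N) > 0" using \<delta>0 N by simp
    ultimately have "eventually (\<lambda>t. dist (M t $ i $ j) (M \<rho> $ i $ j) < \<delta>0 / (N*N)) (at \<rho>)"
      by (rule tendstoD)
    then show "eventually (\<lambda>t. \<bar>M t $ i $ j - M \<rho> $ i $ j\<bar> \<le> \<delta>0 / (N*N)) (at \<rho>)"
      by eventually_elim (simp add: dist_real_def)
  qed
  have E4: "eventually (\<lambda>t. t \<in> T) (at \<rho>)"
    unfolding eventually_at_topological using T by blast
  show "eventually (\<lambda>t. norm (y t - y \<rho> - (t - \<rho>) *\<^sub>R y') \<le> \<epsilon> * norm (t - \<rho>)) (at \<rho>)"
    using E1 E2 E3 E4
  proof eventually_elim
    case (elim t)
    define e where "e = y t - y \<rho> - (t - \<rho>) *\<^sub>R y'"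
    define \<beta> where "\<beta> = b t - b \<rho> - (t - \<rho>) *\<^sub>R b'"
    define \<gamma> where "\<gamma> = M t - M \<rho> - (t - \<rho>) *\<^sub>R M'"
    define \<Delta> where "\<Delta> = M t - M \<rho>"
    have eK: "e \<in> K" unfolding e_def
      using yK elim(4) y'K K by (simp add: subspace_diff subspace_scale)
    have nb: "norm \<beta> \<le> \<eta> * \<bar>t - \<rho>\<bar>"
    proof -
      have "norm \<beta> \<le> N * ((\<eta> / N) * \<bar>t - \<rho>\<bar>)"
        using elim(1) unfolding N_def by (intro l1_bound) (simp add: \<beta>_def)
      then show ?thesis using N by simp
    qed
    have mg: "mb \<gamma> \<le> \<eta> * \<bar>t - \<rho>\<bar>"
    proof -
      have "mb \<gamma> \<le> N * N * ((\<eta> / (N*N)) * \<bar>t - \<rho>\<bar>)"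
        using elim(2) unfolding N_def by (intro mb_le) (simp add: \<gamma>_def)
      then show ?thesis using N by simp
    qed
    have md: "mb \<Delta> \<le> \<delta>0"
    proof -
      have "mb \<Delta> \<le> N * N * (\<delta>0 / (N*N))"
        using elim(3) unfolding N_def by (intro mb_le) (simp add: \<Delta>_def)
      then show ?thesis using N by simp
    qed
    have yt: "y t = e + y \<rho> + (t - \<rho>) *\<^sub>R y'" by (simp add: e_def)
    have a1: "e \<bullet> (M t *v (e + y \<rho> + (t - \<rho>) *\<^sub>R y')) = e \<bullet> b t"
      using eq elim(4) eK by (simp flip: yt)
    have a2: "e \<bullet> (M \<rho> *v y \<rho>) = e \<bullet> b \<rho>" using eq T(2) eK by blast
    have a3: "e \<bullet> (M \<rho> *v y') = e \<bullet> b' - e \<bullet> (M' *v y \<rho>)" using y'eq eK by (simp add: inner_diff_right)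
    have key: "e \<bullet> (M \<rho> *v e) = e \<bullet> \<beta> - e \<bullet> (\<gamma> *v y \<rho>) - e \<bullet> (\<Delta> *v e) - (t - \<rho>) * (e \<bullet> (\<Delta> *v y'))"
    proof -
      have a3t: "t * (e \<bullet> (M' *v y \<rho>)) + t * (e \<bullet> (M \<rho> *v y')) = t * (e \<bullet> b')"
        by (simp add: a3 algebra_simps)
      have a3r: "\<rho> * (e \<bullet> (M' *v y \<rho>)) + \<rho> * (e \<bullet> (M \<rho> *v y')) = \<rho> * (e \<bullet> b')"
        by (simp add: a3 algebra_simps)
      show ?thesis
        using a1 a2 a3 unfolding \<beta>_def \<gamma>_def \<Delta>_def
        apply (simp add: algebra_simps inner_diff_right inner_add_right flip: scaleR_matrix_vector_assoc)
        using a3t a3r by linarith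
    qed
    define n where "n = norm e"
    define a where "a = \<bar>t - \<rho>\<bar>"
    have n0: "n \<ge> 0" and a0: "a \<ge> 0" unfolding n_def a_def by auto
    have t1: "e \<bullet> \<beta> \<le> n * (\<eta> * a)"
      using Cauchy_Schwarz_ineq2[of e \<beta>] nb n0 unfolding n_def a_def
      by (smt (verit) mult_left_mono)
    have t2: "- (e \<bullet> (\<gamma> *v y \<rho>)) \<le> (\<eta> * a) * n * norm (y \<rho>)"
    proof -
      have "\<bar>e \<bullet> (\<gamma> *v y \<rho>)\<bar> \<le> mb \<gamma> * n * norm (y \<rho>)" unfolding n_def by (rule mvbound)
      also have "\<dots> \<le> (\<eta> * a) * n * norm (y \<rho>)"
        using mg n0 unfolding a_def by (intro mult_right_mono) auto
      finally show ?thesis by linarith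
    qed
    have t3: "- (e \<bullet> (\<Delta> *v e)) \<le> (c/2) * n * n"
    proof -
      have "\<bar>e \<bullet> (\<Delta> *v e)\<bar> \<le> mb \<Delta> * n * n" unfolding n_def by (rule mvbound)
      also have "\<dots> \<le> (c/2) * n * n"
        using md \<delta>0 n0 by (intro mult_right_mono) auto
      finally show ?thesis by linarith
    qed
    have t4: "- ((t - \<rho>) * (e \<bullet> (\<Delta> *v y'))) \<le> a * ((\<eta> * n) * norm y')"
    proof -
      have "\<bar>e \<bullet> (\<Delta> *v y')\<bar> \<le> mb \<Delta> * n * norm y'" unfolding n_def by (rule mvbound)
      also have "\<dots> \<le> \<eta> * n * norm y'"
        using md \<delta>0 n0 by (intro mult_right_mono) auto
      finally have "\<bar>e \<bullet> (\<Delta> *v y')\<bar> \<le> \<eta> * n * norm y'" .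
      then have "\<bar>t - \<rho>\<bar> * \<bar>e \<bullet> (\<Delta> *v y')\<bar> \<le> a * (\<eta> * n * norm y')"
        unfolding a_def by (intro mult_left_mono) auto
      moreover have "- ((t - \<rho>) * (e \<bullet> (\<Delta> *v y'))) \<le> \<bar>t - \<rho>\<bar> * \<bar>e \<bullet> (\<Delta> *v y')\<bar>"
        by (metis abs_ge_minus_self abs_mult)
      ultimately show ?thesis by linarith
    qed
    have "c * n^2 \<le> e \<bullet> (M \<rho> *v e)" using coer eK unfolding n_def by blast
    then have "c * n^2 \<le> n * (\<eta> * a) + (\<eta> * a) * n * norm (y \<rho>) + (c/2) * n * n + a * ((\<eta> * n) * norm y')"
      using key t1 t2 t3 t4 by linarith
    then have "n * ((c/2) * n) \<le> n * (\<eta> * a * C0)"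
      unfolding C0_def by (simp add: power2_eq_square algebra_simps)
    then have "n = 0 \<or> (c/2) * n \<le> \<eta> * a * C0"
    proof (cases "n = 0")
      case False
      then have "n > 0" using n0 by simp
      then show ?thesis using \<open>n * ((c/2) * n) \<le> n * (\<eta> * a * C0)\<close>
        by (simp only: mult_le_cancel_left_pos) simp
    qed simp
    then have "n \<le> \<epsilon> * a"
    proof
      assume "n = 0" then show ?thesis using \<epsilon> a0 by simp
    next
      assume h: "(c/2) * n \<le> \<eta> * a * C0"
      have "\<eta> * a * C0 = (c/2) * (\<epsilon> * a)" unfolding \<eta>_def using C0 by (simp add: field_simps)
      then have "(c/2) * n \<le> (c/2) * (\<epsilon> * a)" using h by linarith
      then show ?thesis by (rule mult_left_le_imp_le) (use c in auto)
    qed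
    then show ?case unfolding n_def a_def e_def by simp
  qed
qed

lemma vec_deriv_component:
  fixes y :: "real \<Rightarrow> real^'n::finite"
  assumes "(y has_derivative (\<lambda>h. h *\<^sub>R y')) (at \<rho>)"
  shows "((\<lambda>t. y t $ i) has_real_derivative y' $ i) (at \<rho>)"
proof -
  have "((\<lambda>v. v $ i) \<circ> y has_derivative (\<lambda>v. v $ i) \<circ> (\<lambda>h. h *\<^sub>R y')) (at \<rho>)"
    by (rule diff_chain_at[OF assms]) (rule bounded_linear_imp_has_derivative[OF bounded_linear_vec_nth])
  moreover have "(\<lambda>x. x * y' $ i) = (*) (y' $ i)" by (auto simp: fun_eq_iff)
  ultimately show ?thesis by (simp add: has_field_derivative_def o_def)
qed



lemma x_deriv:
  fixes g :: "real^'n::finite \<Rightarrow> real^'n" and x :: "real \<Rightarrow> real^'n" and H :: "real^'n^'n"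
  assumes T: "open T" "\<rho> \<in> T" and K: "subspace K"
    and xK: "\<forall>t\<in>T. x t - x \<rho> \<in> K"
    and cont: "continuous (at \<rho>) x"
    and stat: "\<forall>t\<in>T. \<forall>z\<in>K. z \<bullet> g (x t) + t * (z \<bullet> u) = 0"
    and gd: "(g has_derivative (\<lambda>h. H *v h)) (at (x \<rho>))"
    and c: "c > 0" and coer: "\<forall>z\<in>K. c * (norm z)^2 \<le> z \<bullet> (H *v z)"
    and y0K: "y0 \<in> K" and y0eq: "\<forall>z\<in>K. z \<bullet> (H *v y0) = - (z \<bullet> u)"
  shows "(x has_derivative (\<lambda>h. h *\<^sub>R y0)) (at \<rho>)"
  unfolding has_derivative_within_alt2
proof (intro conjI allI impI)
  show "bounded_linear (\<lambda>h. h *\<^sub>R y0)" by (rule bounded_linear_scaleR_left)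
  fix \<epsilon> :: real assume \<epsilon>: "\<epsilon> > 0"
  define \<eta> where "\<eta> = \<epsilon> * c / (2 * (1 + norm y0))"
  have \<eta>: "\<eta> > 0" unfolding \<eta>_def using \<epsilon> c by (simp add: add_pos_nonneg)
  define \<eta>' where "\<eta>' = min (c/2) \<eta>"
  have \<eta>': "\<eta>' > 0" "\<eta>' \<le> c/2" "\<eta>' \<le> \<eta>" unfolding \<eta>'_def using c \<eta> by auto
  obtain d where d: "d > 0" and dd: "\<And>y. norm (y - x \<rho>) < d \<Longrightarrow>
      norm (g y - g (x \<rho>) - H *v (y - x \<rho>)) \<le> \<eta>' * norm (y - x \<rho>)"
    using gd \<eta>'(1) unfolding has_derivative_at_alt by blast
  have E1: "eventually (\<lambda>t. dist (x t) (x \<rho>) < d) (at \<rho>)"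
    using cont d unfolding continuous_at by (rule tendstoD)
  have E2: "eventually (\<lambda>t. t \<in> T) (at \<rho>)"
    unfolding eventually_at_topological using T by blast
  show "eventually (\<lambda>t. norm (x t - x \<rho> - (t - \<rho>) *\<^sub>R y0) \<le> \<epsilon> * norm (t - \<rho>)) (at \<rho>)"
    using E1 E2
  proof eventually_elim
    case (elim t)
    define \<delta> where "\<delta> = x t - x \<rho>"
    define e where "e = \<delta> - (t - \<rho>) *\<^sub>R y0"
    define r where "r = g (x t) - g (x \<rho>) - H *v \<delta>"
    have eK: "e \<in> K" unfolding e_def \<delta>_def
      using xK elim(2) y0K K by (simp add: subspace_diff subspace_scale)
    have nr: "norm r \<le> \<eta>' * norm \<delta>"
      unfolding r_def \<delta>_def using dd elim(1) by (simp add: dist_norm)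
    have s1: "e \<bullet> g (x t) + t * (e \<bullet> u) = 0" using stat elim(2) eK by blast
    have s2: "e \<bullet> g (x \<rho>) + \<rho> * (e \<bullet> u) = 0" using stat T(2) eK by blast
    have s3: "e \<bullet> (H *v y0) = - (e \<bullet> u)" using y0eq eK by blast
    have key: "e \<bullet> (H *v e) = - (e \<bullet> r)"
    proof -
      have "e \<bullet> (H *v e) = e \<bullet> (H *v \<delta>) - (t - \<rho>) * (e \<bullet> (H *v y0))"
        unfolding e_def by (simp add: matrix_vector_mult_diff_distrib matrix_vector_mult_scaleR inner_diff_right)
      also have "\<dots> = e \<bullet> (H *v \<delta>) + (t - \<rho>) * (e \<bullet> u)" using s3 by simp
      also have "e \<bullet> (H *v \<delta>) = e \<bullet> g (x t) - e \<bullet> g (x \<rho>) - e \<bullet> r"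
        unfolding r_def by (simp add: inner_diff_right)
      finally show ?thesis using s1 s2 by (simp add: algebra_simps)
    qed
    define n where "n = norm e"
    define a where "a = \<bar>t - \<rho>\<bar>"
    have n0: "n \<ge> 0" and a0: "a \<ge> 0" unfolding n_def a_def by auto
    have nd: "norm \<delta> \<le> n + a * norm y0"
    proof -
      have "\<delta> = e + (t - \<rho>) *\<^sub>R y0" unfolding e_def by simp
      then have "norm \<delta> \<le> norm e + norm ((t - \<rho>) *\<^sub>R y0)" by (metis norm_triangle_ineq)
      then show ?thesis unfolding n_def a_def by simp
    qed
    have "c * n^2 \<le> - (e \<bullet> r)" using coer eK key unfolding n_def by auto
    also have "\<dots> \<le> n * norm r" using Cauchy_Schwarz_ineq2[of e r] unfolding n_def by linarith
    also have "\<dots> \<le> n * (\<eta>' * (n + a * norm y0))"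
      using nr nd n0 \<eta>' by (intro mult_left_mono) (auto intro: order_trans mult_left_mono)
    also have "\<dots> \<le> n * ((c/2) * n + \<eta> * (a * norm y0))"
    proof (intro mult_left_mono n0)
      have "\<eta>' * n \<le> (c/2) * n" using \<eta>' n0 by (intro mult_right_mono) auto
      moreover have "\<eta>' * (a * norm y0) \<le> \<eta> * (a * norm y0)" using \<eta>' a0 by (intro mult_right_mono) auto
      ultimately show "\<eta>' * (n + a * norm y0) \<le> (c/2) * n + \<eta> * (a * norm y0)"
        by (simp add: distrib_left)
    qed
    finally have "n * ((c/2) * n) \<le> n * (\<eta> * (a * norm y0))"
      by (simp add: power2_eq_square algebra_simps)
    then have "n = 0 \<or> (c/2) * n \<le> \<eta> * (a * norm y0)"
    proof (cases "n = 0")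
      case False
      then have "n > 0" using n0 by simp
      then show ?thesis using \<open>n * ((c/2) * n) \<le> n * (\<eta> * (a * norm y0))\<close>
        by (simp only: mult_le_cancel_left_pos) simp
    qed simp
    then have "n \<le> \<epsilon> * a"
    proof
      assume "n = 0" then show ?thesis using \<epsilon> a0 by simp
    next
      assume h: "(c/2) * n \<le> \<eta> * (a * norm y0)"
      have "\<eta> * (a * norm y0) = (c/2) * (\<epsilon> * a * (norm y0 / (1 + norm y0)))"
        unfolding \<eta>_def by (simp add: field_simps add_pos_nonneg)
      also have "\<dots> \<le> (c/2) * (\<epsilon> * a * 1)"
        using c \<epsilon> a0 by (intro mult_left_mono) (auto simp: add_pos_nonneg)
      finally have "(c/2) * n \<le> (c/2) * (\<epsilon> * a)" using h by simp
      then show ?thesis by (rule mult_left_le_imp_le) (use c in auto)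
    qed
    then show ?case unfolding n_def a_def e_def \<delta>_def by simp
  qed
qed



lemma pd_inv:
  fixes H :: "real^'n::finite^'n"
  assumes pd: "\<forall>z. z \<noteq> 0 \<longrightarrow> z \<bullet> (H *v z) > 0"
  shows "H ** matrix_inv H = mat 1" "matrix_inv H ** H = mat 1"
proof -
  have "inj ((*v) H)"
  proof (rule injI)
    fix x y assume "H *v x = H *v y"
    then have "H *v (x - y) = 0" by (simp add: matrix_vector_mult_diff_distrib)
    then show "x = y" using pd[rule_format, of "x - y"] by auto
  qed
  then obtain B where "B ** H = mat 1" using matrix_left_invertible_injective by blast
  then have "invertible H" using invertible_left_inverse by blast
  then have "\<exists>A'. H ** A' = mat 1 \<and> A' ** H = mat 1" unfolding invertible_def .
  then have "H ** matrix_inv H = mat 1 \<and> matrix_inv H ** H = mat 1"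
    unfolding matrix_inv_def by (rule someI_ex)
  then show "H ** matrix_inv H = mat 1" "matrix_inv H ** H = mat 1" by auto
qed

lemma inv_sym:
  fixes H :: "real^'n::finite^'n"
  assumes "transpose H = H" "H ** Hi = mat 1" "Hi ** H = mat 1"
  shows "transpose Hi = Hi"
proof -
  have "transpose Hi ** H = mat 1"
    by (metis assms(1,2) matrix_transpose_mul transpose_mat)
  then have "transpose Hi = (transpose Hi ** H) ** Hi"
    by (metis assms(2) matrix_mul_assoc matrix_mul_rid)
  then show ?thesis using \<open>transpose Hi ** H = mat 1\<close> by simp
qed

lemma inv_pd:
  fixes H :: "real^'n::finite^'n"
  assumes pd: "\<forall>z. z \<noteq> 0 \<longrightarrow> z \<bullet> (H *v z) > 0"
  shows "\<forall>z. z \<noteq> 0 \<longrightarrow> z \<bullet> (matrix_inv H *v z) > 0"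
proof (intro allI impI)
  fix z :: "real^'n" assume z: "z \<noteq> 0"
  define q where "q = matrix_inv H *v z"
  have zq: "z = H *v q" unfolding q_def by (simp add: matrix_vector_mul_assoc pd_inv(1)[OF pd])
  have "q \<noteq> 0" using z zq by auto
  then have "q \<bullet> (H *v q) > 0" using pd by blast
  moreover have "z \<bullet> (matrix_inv H *v z) = q \<bullet> (H *v q)"
  proof -
    have "z \<bullet> (matrix_inv H *v z) = z \<bullet> q" unfolding q_def ..
    also have "\<dots> = (H *v q) \<bullet> q" using zq by simp
    finally show ?thesis by (simp add: inner_commute)
  qed
  ultimately show "z \<bullet> (matrix_inv H *v z) > 0" by simp
qed

lemma inv_on_exists:
  fixes Gm :: "'a \<Rightarrow> 'a \<Rightarrow> real"
  assumes fin: "finite S" and card: "card S \<le> CARD('n::finite)"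
    and pd: "\<forall>c. (\<exists>a\<in>S. c a \<noteq> 0) \<longrightarrow> (\<Sum>a\<in>S. \<Sum>b\<in>S. c a * Gm a b * c b) > 0"
  shows "\<exists>B. (\<forall>i j. (i \<notin> S \<or> j \<notin> S) \<longrightarrow> B i j = 0)
      \<and> (\<forall>i\<in>S. \<forall>j\<in>S. (\<Sum>k\<in>S. Gm i k * B k j) = (if i = j then 1 else 0))"
proof -
  obtain \<iota> :: "'a \<Rightarrow> 'n" where \<iota>: "inj_on \<iota> S"
    using card_le_inj[of S "UNIV::'n set"] fin card by auto
  define T where "T = \<iota> ` S"
  define \<kappa> where "\<kappa> = the_inv_into S \<iota>"
  have \<kappa>: "\<And>a. a \<in> S \<Longrightarrow> \<kappa> (\<iota> a) = a" unfolding \<kappa>_def using \<iota> by (simp add: the_inv_into_f_f)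
  define Mt :: "real^'n^'n" where "Mt = (\<chi> p q. if p \<in> T \<and> q \<in> T then Gm (\<kappa> p) (\<kappa> q) else if p = q then 1 else 0)"
  have quad: "z \<bullet> (Mt *v z) = (\<Sum>a\<in>S. \<Sum>b\<in>S. z$(\<iota> a) * Gm a b * z$(\<iota> b)) + (\<Sum>p\<in>-T. (z$p)^2)" for z
  proof -
    have "z \<bullet> (Mt *v z) = (\<Sum>p\<in>UNIV. \<Sum>q\<in>UNIV. z$p * Mt$p$q * z$q)"
      by (simp add: inner_vec_def matrix_vector_mult_def sum_distrib_left mult_ac)
    also have "\<dots> = (\<Sum>p\<in>T. \<Sum>q\<in>UNIV. z$p * Mt$p$q * z$q) + (\<Sum>p\<in>-T. \<Sum>q\<in>UNIV. z$p * Mt$p$q * z$q)"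
      using sum.subset_diff[of T UNIV "\<lambda>p. \<Sum>q\<in>UNIV. z$p * Mt$p$q * z$q"] by (simp add: Compl_eq_Diff_UNIV)
    also have "(\<Sum>p\<in>T. \<Sum>q\<in>UNIV. z$p * Mt$p$q * z$q) = (\<Sum>p\<in>T. \<Sum>q\<in>T. z$p * Gm (\<kappa> p) (\<kappa> q) * z$q)"
    proof (rule sum.cong[OF refl])
      fix p assume p: "p \<in> T"
      have "(\<Sum>q\<in>UNIV. z$p * Mt$p$q * z$q) = (\<Sum>q\<in>T. z$p * Mt$p$q * z$q)"
        by (rule sum.mono_neutral_right) (auto simp: Mt_def p)
      also have "\<dots> = (\<Sum>q\<in>T. z$p * Gm (\<kappa> p) (\<kappa> q) * z$q)"
        by (rule sum.cong) (auto simp: Mt_def p)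
      finally show "(\<Sum>q\<in>UNIV. z$p * Mt$p$q * z$q) = (\<Sum>q\<in>T. z$p * Gm (\<kappa> p) (\<kappa> q) * z$q)" .
    qed
    also have "\<dots> = (\<Sum>a\<in>S. \<Sum>b\<in>S. z$(\<iota> a) * Gm a b * z$(\<iota> b))"
      unfolding T_def using \<iota> by (simp add: sum.reindex \<kappa>)
    also have "(\<Sum>p\<in>-T. \<Sum>q\<in>UNIV. z$p * Mt$p$q * z$q) = (\<Sum>p\<in>-T. (z$p)^2)"
    proof (rule sum.cong[OF refl])
      fix p assume p: "p \<in> -T"
      have "(\<Sum>q\<in>UNIV. z$p * Mt$p$q * z$q) = (\<Sum>q\<in>UNIV. if q = p then z$p * z$p else 0)"
        by (rule sum.cong) (use p in \<open>auto simp: Mt_def\<close>)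
      then show "(\<Sum>q\<in>UNIV. z$p * Mt$p$q * z$q) = (z$p)^2" by (simp add: power2_eq_square)
    qed
    finally show ?thesis .
  qed
  have "inj ((*v) Mt)"
  proof (rule injI)
    fix x y assume "Mt *v x = Mt *v y"
    then have z0: "Mt *v (x - y) = 0" by (simp add: matrix_vector_mult_diff_distrib)
    define z where "z = x - y"
    have Q0: "(\<Sum>a\<in>S. \<Sum>b\<in>S. z$(\<iota> a) * Gm a b * z$(\<iota> b)) + (\<Sum>p\<in>-T. (z$p)^2) = 0"
      using quad[of z] z0 unfolding z_def by simp
    have s2: "(\<Sum>p\<in>-T. (z$p)^2) \<ge> 0" by (intro sum_nonneg) auto
    have zT: "\<forall>a\<in>S. z$(\<iota> a) = 0"
    proof (rule ccontr)
      assume "\<not> (\<forall>a\<in>S. z$(\<iota> a) = 0)"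
      then have "(\<Sum>a\<in>S. \<Sum>b\<in>S. z$(\<iota> a) * Gm a b * z$(\<iota> b)) > 0"
        using pd[rule_format, of "\<lambda>a. z$(\<iota> a)"] by blast
      then show False using Q0 s2 by linarith
    qed
    then have "(\<Sum>a\<in>S. \<Sum>b\<in>S. z$(\<iota> a) * Gm a b * z$(\<iota> b)) = 0" by simp
    then have "(\<Sum>p\<in>-T. (z$p)^2) = 0" using Q0 by simp
    then have "\<forall>p\<in>-T. (z$p)^2 = 0" by (subst (asm) sum_nonneg_eq_0_iff) auto
    have "\<forall>p. z$p = 0"
    proof
      fix p show "z$p = 0"
      proof (cases "p \<in> T")
        case True then obtain a where "a \<in> S" "p = \<iota> a" unfolding T_def by blast
        then show ?thesis using zT by simp
      next
        case False then show ?thesis using \<open>\<forall>p\<in>-T. (z$p)^2 = 0\<close> by simp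
      qed
    qed
    then show "x = y" unfolding z_def by (simp add: vec_eq_iff)
  qed
  then obtain B0 where "B0 ** Mt = mat 1" using matrix_left_invertible_injective by blast
  then have MB: "Mt ** B0 = mat 1" using matrix_left_right_inverse by blast
  define B where "B = (\<lambda>a b. if a \<in> S \<and> b \<in> S then B0 $ (\<iota> a) $ (\<iota> b) else 0)"
  show ?thesis
  proof (intro exI[of _ B] conjI ballI allI impI)
    fix i j assume "i \<notin> S \<or> j \<notin> S" then show "B i j = 0" unfolding B_def by auto
  next
    fix i j assume i: "i \<in> S" and j: "j \<in> S"
    have "(\<Sum>k\<in>S. Gm i k * B k j) = (\<Sum>k\<in>S. Mt $ (\<iota> i) $ (\<iota> k) * B0 $ (\<iota> k) $ (\<iota> j))"
      by (rule sum.cong) (auto simp: B_def Mt_def T_def i j \<kappa>)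
    also have "\<dots> = (\<Sum>q\<in>T. Mt $ (\<iota> i) $ q * B0 $ q $ (\<iota> j))"
      unfolding T_def using \<iota> by (simp add: sum.reindex)
    also have "\<dots> = (\<Sum>q\<in>UNIV. Mt $ (\<iota> i) $ q * B0 $ q $ (\<iota> j))"
      by (rule sum.mono_neutral_left) (auto simp: Mt_def T_def i)
    also have "\<dots> = (Mt ** B0) $ (\<iota> i) $ (\<iota> j)" by (simp add: matrix_matrix_mult_def)
    also have "\<dots> = (if i = j then 1 else 0)" using MB \<iota> i j by (simp add: mat_def inj_on_eq_iff)
    finally show "(\<Sum>k\<in>S. Gm i k * B k j) = (if i = j then 1 else 0)" .
  qed
qed



definition Ggen :: "real^'n::finite^'n \<Rightarrow> 'a set \<Rightarrow> ('a \<Rightarrow> real^'n) \<Rightarrow> 'a \<Rightarrow> 'a \<Rightarrow> real" where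
  "Ggen H S U = inv_on S (\<lambda>a b. (U a v* matrix_inv H) \<bullet> U b)"

definition Pgen :: "real^'n::finite^'n \<Rightarrow> 'a set \<Rightarrow> ('a \<Rightarrow> real^'n) \<Rightarrow> 'n \<Rightarrow> 'n \<Rightarrow> real" where
  "Pgen H S U = (\<lambda>i j. matrix_inv H $ i $ j - (\<Sum>a\<in>S. \<Sum>b\<in>S. (matrix_inv H *v U a) $ i * Ggen H S U a b * (U b v* matrix_inv H) $ j))"

definition Qgen :: "real^'n::finite^'n \<Rightarrow> 'a set \<Rightarrow> ('a \<Rightarrow> real^'n) \<Rightarrow> 'n \<Rightarrow> 'a \<Rightarrow> real" where
  "Qgen H S U = (\<lambda>i a. \<Sum>b\<in>S. (matrix_inv H *v U b) $ i * Ggen H S U b a)"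

lemma mv_sum: "(A::real^'n::finite^'m::finite) *v (\<Sum>i\<in>S. f i) = (\<Sum>i\<in>S. A *v f i)"
  using linear_sum[OF matrix_vector_mul_linear[of A]] by simp

locale gset =
  fixes H :: "real^'n::finite^'n" and S :: "'a set" and U :: "'a \<Rightarrow> real^'n"
  assumes symH: "transpose H = H"
    and pdH: "\<forall>z. z \<noteq> 0 \<longrightarrow> z \<bullet> (H *v z) > 0"
    and finS: "finite S" and injU: "inj_on U S" and indU: "independent (U ` S)"
begin

abbreviation "Hi \<equiv> matrix_inv H"
definition "Gm a b = (U a v* Hi) \<bullet> U b"
abbreviation "G \<equiv> Ggen H S U"
definition "Nv a = Hi *v U a"

lemma HHi: "H ** Hi = mat 1" and HiH: "Hi ** H = mat 1"
  using pd_inv[OF pdH] by auto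

lemma symHi: "transpose Hi = Hi"
  using inv_sym[OF symH HHi HiH] .

lemma vmHi: "x v* Hi = Hi *v x"
  by (metis symHi transpose_matrix_vector)

lemma Gm_alt: "Gm a b = U a \<bullet> Nv b"
  unfolding Gm_def Nv_def by (simp add: dot_lmul_matrix)

lemma Gm_sym: "Gm a b = Gm b a"
  unfolding Gm_def by (metis vmHi dot_lmul_matrix inner_commute)

lemma H_Nv: "H *v Nv a = U a"
  unfolding Nv_def by (simp add: matrix_vector_mul_assoc HHi)

lemma card_S: "card S \<le> CARD('n)"
proof -
  have "card (U ` S) \<le> DIM(real^'n)" using independent_bound[OF indU] by simp
  then show ?thesis using card_image[OF injU] by simp
qed

lemma Gm_pd: "\<forall>c. (\<exists>a\<in>S. c a \<noteq> 0) \<longrightarrow> (\<Sum>a\<in>S. \<Sum>b\<in>S. c a * Gm a b * c b) > 0"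
proof (intro allI impI)
  fix c :: "'a \<Rightarrow> real" assume c: "\<exists>a\<in>S. c a \<noteq> 0"
  define wv where "wv = (\<Sum>a\<in>S. c a *\<^sub>R U a)"
  have "wv \<noteq> 0"
  proof
    assume w0: "wv = 0"
    define u where "u v = c (the_inv_into S U v)" for v
    have "(\<Sum>v\<in>U ` S. u v *\<^sub>R v) = (\<Sum>a\<in>S. c a *\<^sub>R U a)"
      using injU by (simp add: sum.reindex u_def the_inv_into_f_f)
    moreover have "\<exists>v\<in>U ` S. u v \<noteq> 0" using c injU by (auto simp: u_def the_inv_into_f_f)
    ultimately have "dependent (U ` S)"
      using w0 finS unfolding wv_def by (auto simp: real_vector.dependent_finite)
    then show False using indU by simp
  qed
  then have "wv \<bullet> (Hi *v wv) > 0" using inv_pd[OF pdH] by blast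
  also have "wv \<bullet> (Hi *v wv) = (\<Sum>a\<in>S. \<Sum>b\<in>S. c a * Gm a b * c b)"
    unfolding wv_def Gm_alt Nv_def
    apply (simp add: mv_sum inner_sum_left inner_sum_right matrix_vector_mult_scaleR sum_distrib_left)
    apply (subst sum.swap)
    apply (simp add: mult_ac)
    done
  finally show "(\<Sum>a\<in>S. \<Sum>b\<in>S. c a * Gm a b * c b) > 0" .
qed

lemma G_prop: "(\<forall>i j. (i \<notin> S \<or> j \<notin> S) \<longrightarrow> G i j = 0)
      \<and> (\<forall>i\<in>S. \<forall>j\<in>S. (\<Sum>k\<in>S. Gm i k * G k j) = (if i = j then 1 else 0))"
proof -
  let ?P = "\<lambda>B. (\<forall>i j. (i \<notin> S \<or> j \<notin> S) \<longrightarrow> B i j = 0)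
      \<and> (\<forall>i\<in>S. \<forall>j\<in>S. (\<Sum>k\<in>S. Gm i k * B k j) = (if i = j then 1 else 0))"
  obtain B where B: "?P B" using inv_on_exists[OF finS card_S Gm_pd] by blast
  have uniq: "B2 = B" if B2: "?P B2" for B2
  proof (intro ext)
    fix i j
    show "B2 i j = B i j"
    proof (cases "i \<in> S \<and> j \<in> S")
      case False then show ?thesis using B B2 by auto
    next
      case True
      define c where "c k = B2 k j - B k j" for k
      have Mc: "(\<Sum>k\<in>S. Gm l k * c k) = 0" if l: "l \<in> S" for l
        using B B2 True l by (simp add: c_def right_diff_distrib sum_subtractf)
      have "(\<Sum>a\<in>S. \<Sum>b\<in>S. c a * Gm a b * c b) = (\<Sum>a\<in>S. c a * (\<Sum>b\<in>S. Gm a b * c b))"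
        by (simp add: sum_distrib_left mult_ac)
      also have "\<dots> = 0" using Mc by simp
      finally have "\<not> (\<exists>a\<in>S. c a \<noteq> 0)" using Gm_pd by force
      then show ?thesis using True by (simp add: c_def)
    qed
  qed
  have "\<exists>!B. ?P B" by (rule ex1I, rule B, erule uniq)
  then have "?P (THE B. ?P B)" by (rule theI')
  moreover have "G = (THE B. ?P B)" unfolding Ggen_def inv_on_def Gm_def ..
  ultimately show ?thesis by simp
qed

lemma G_out: "i \<notin> S \<or> j \<notin> S \<Longrightarrow> G i j = 0" using G_prop by blast
lemma G_inv: "i \<in> S \<Longrightarrow> j \<in> S \<Longrightarrow> (\<Sum>k\<in>S. Gm i k * G k j) = (if i = j then 1 else 0)"
  using G_prop by blast

lemma G_sym: "G a b = G b a"
proof (cases "a \<in> S \<and> b \<in> S")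
  case False then show ?thesis using G_out by auto
next
  case True
  have "(\<Sum>k\<in>S. \<Sum>l\<in>S. G k a * Gm k l * G l b) = (\<Sum>k\<in>S. G k a * (\<Sum>l\<in>S. Gm k l * G l b))"
    by (simp add: sum_distrib_left mult_ac)
  also have "\<dots> = (\<Sum>k\<in>S. G k a * (if k = b then 1 else 0))"
    by (rule sum.cong) (use True G_inv in auto)
  also have "\<dots> = G b a" using True finS by (simp add: if_distrib sum.delta cong: if_cong)
  finally have 1: "(\<Sum>k\<in>S. \<Sum>l\<in>S. G k a * Gm k l * G l b) = G b a" .
  have "(\<Sum>k\<in>S. \<Sum>l\<in>S. G k a * Gm k l * G l b) = (\<Sum>l\<in>S. \<Sum>k\<in>S. G k a * Gm k l * G l b)"
    by (rule sum.swap)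
  also have "\<dots> = (\<Sum>l\<in>S. (\<Sum>k\<in>S. Gm l k * G k a) * G l b)"
    by (simp add: sum_distrib_left sum_distrib_right Gm_sym mult_ac)
  also have "\<dots> = (\<Sum>l\<in>S. (if l = a then 1 else 0) * G l b)"
    by (rule sum.cong) (use True G_inv in auto)
  also have "\<dots> = (\<Sum>l\<in>S. if l = a then G l b else 0)" by (rule sum.cong) auto
  also have "\<dots> = G a b" using True finS by (simp add: sum.delta)
  finally show ?thesis using 1 by simp
qed

end


context gset begin

abbreviation "P \<equiv> Pgen H S U"
abbreviation "Q \<equiv> Qgen H S U"
definition "colP j = (\<chi> i. P i j)"
definition "colQ a = (\<chi> i. Q i a)"
definition "Kz z \<longleftrightarrow> (\<forall>c\<in>S. U c \<bullet> z = 0)"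

lemma P_alt: "P i j = Hi$i$j - (\<Sum>a\<in>S. \<Sum>b\<in>S. Nv a $ i * G a b * Nv b $ j)"
  unfolding Pgen_def Nv_def by (simp add: vmHi)

lemma colP_alt: "colP j = column j Hi - (\<Sum>a\<in>S. \<Sum>b\<in>S. (G a b * Nv b $ j) *\<^sub>R Nv a)"
  unfolding colP_def by (simp add: vec_eq_iff P_alt column_def mult_ac)

lemma colQ_alt: "colQ a = (\<Sum>b\<in>S. G b a *\<^sub>R Nv b)"
  unfolding colQ_def Qgen_def Nv_def by (simp add: vec_eq_iff mult_ac)

lemma Uc_col: "U c \<bullet> column j Hi = Nv c $ j"
proof -
  have "U c \<bullet> column j Hi = (U c v* Hi) $ j"
    by (simp add: inner_vec_def column_def vector_matrix_mult_def)
  then show ?thesis by (simp add: vmHi Nv_def)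
qed

lemma colP_K: "c \<in> S \<Longrightarrow> U c \<bullet> colP j = 0"
proof -
  assume c: "c \<in> S"
  have "U c \<bullet> (\<Sum>a\<in>S. \<Sum>b\<in>S. (G a b * Nv b $ j) *\<^sub>R Nv a) = (\<Sum>a\<in>S. \<Sum>b\<in>S. G a b * Nv b $ j * Gm c a)"
    by (simp add: inner_sum_right Gm_alt)
  also have "\<dots> = (\<Sum>b\<in>S. (\<Sum>a\<in>S. Gm c a * G a b) * Nv b $ j)"
    by (subst sum.swap) (simp add: sum_distrib_left sum_distrib_right mult_ac)
  also have "\<dots> = (\<Sum>b\<in>S. if b = c then Nv b $ j else 0)"
    by (rule sum.cong) (use c G_inv in auto)
  also have "\<dots> = Nv c $ j" using c finS by (simp add: sum.delta')
  finally show ?thesis unfolding colP_alt by (simp add: inner_diff_right Uc_col)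
qed

lemma H_col: "H *v column j Hi = axis j 1"
proof -
  have "H *v column j Hi = column j (H ** Hi)"
    by (simp add: vec_eq_iff matrix_vector_mult_def column_def matrix_matrix_mult_def)
  then show ?thesis by (simp add: HHi vec_eq_iff column_def mat_def axis_def)
qed

lemma colP_eq: "Kz z \<Longrightarrow> z \<bullet> (H *v colP j) = z $ j"
proof -
  assume z: "Kz z"
  have "z \<bullet> (H *v (\<Sum>a\<in>S. \<Sum>b\<in>S. (G a b * Nv b $ j) *\<^sub>R Nv a)) = (\<Sum>a\<in>S. \<Sum>b\<in>S. (G a b * Nv b $ j) * (U a \<bullet> z))"
    by (simp add: mv_sum matrix_vector_mult_scaleR H_Nv inner_sum_right inner_commute)
  also have "\<dots> = 0" using z unfolding Kz_def by simp
  finally show ?thesis unfolding colP_alt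
    by (simp add: matrix_vector_mult_diff_distrib inner_diff_right H_col flip: cart_eq_inner_axis)
qed

lemma colQ_U: "a \<in> S \<Longrightarrow> c \<in> S \<Longrightarrow> U c \<bullet> colQ a = (if c = a then 1 else 0)"
  unfolding colQ_alt by (simp add: inner_sum_right Gm_alt[symmetric] G_inv mult.commute)

lemma colQ_eq: "Kz z \<Longrightarrow> z \<bullet> (H *v colQ a) = 0"
  unfolding colQ_alt Kz_def
  by (simp add: mv_sum matrix_vector_mult_scaleR H_Nv inner_sum_right inner_commute)

lemma QHQ: "a \<in> S \<Longrightarrow> b \<in> S \<Longrightarrow> (\<Sum>k\<in>UNIV. \<Sum>l\<in>UNIV. Q k b * H$k$l * Q l a) = G b a"
proof -
  assume a: "a \<in> S" and b: "b \<in> S"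
  have "(\<Sum>k\<in>UNIV. \<Sum>l\<in>UNIV. Q k b * H$k$l * Q l a) = colQ b \<bullet> (H *v colQ a)"
    by (simp add: colQ_def inner_vec_def matrix_vector_mult_def sum_distrib_left mult_ac)
  also have "H *v colQ a = (\<Sum>d\<in>S. G d a *\<^sub>R U d)"
    unfolding colQ_alt by (simp add: mv_sum matrix_vector_mult_scaleR H_Nv)
  also have "colQ b \<bullet> (\<Sum>d\<in>S. G d a *\<^sub>R U d) = (\<Sum>d\<in>S. G d a * (U d \<bullet> colQ b))"
    by (simp add: inner_sum_right inner_commute)
  also have "\<dots> = (\<Sum>d\<in>S. if d = b then G d a else 0)"
    by (rule sum.cong) (use b colQ_U in auto)
  also have "\<dots> = G b a" using b finS by (simp add: sum.delta')
  finally show ?thesis .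
qed

lemma P_sym: "P i j = P j i"
proof -
  have "Hi$i$j = Hi$j$i" using symHi by (metis transpose_def vec_lambda_beta)
  moreover have "(\<Sum>a\<in>S. \<Sum>b\<in>S. Nv a $ i * G a b * Nv b $ j) = (\<Sum>a\<in>S. \<Sum>b\<in>S. Nv a $ j * G a b * Nv b $ i)"
    by (subst sum.swap) (simp add: G_sym mult_ac)
  ultimately show ?thesis by (simp add: P_alt)
qed

end


definition gradf :: "(real^'n::finite \<Rightarrow> real) \<Rightarrow> real^'n \<Rightarrow> real^'n" where
  "gradf f y = (\<chi> i. partial i f y)"

lemma C3_D: assumes "C3 f"
  shows "\<forall>y. f differentiable at y" "\<forall>i y. partial i f differentiable at y"
    "\<forall>i j y. partial j (partial i f) differentiable at y"
  using assms unfolding C3_def by auto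

lemma hess_sym: assumes "C3 f" shows "hess f y $ i $ j = hess f y $ j $ i"
  using schwarz[OF C3_D(1,2)[OF assms]] unfolding hess_def by simp

lemma hess_transpose: assumes "C3 f" shows "transpose (hess f y) = hess f y"
  using hess_sym[OF assms] by (simp add: transpose_def vec_eq_iff)

lemma fd_grad: assumes "C3 f" shows "frechet_derivative f (at y) z = z \<bullet> gradf f y"
  using fd_expand[of f y z] C3_D(1)[OF assms] by (simp add: inner_vec_def gradf_def)

lemma grad_deriv:
  fixes f :: "real^'n::finite \<Rightarrow> real"
  assumes "C3 f"
  shows "(gradf f has_derivative (\<lambda>h. hess f y *v h)) (at y)"
proof (rule has_derivative_componentwise_within[THEN iffD2], rule ballI)
  fix b :: "real^'n" assume "b \<in> Basis"
  then obtain k where b: "b = axis k 1" unfolding Basis_vec_def by auto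
  have d: "(partial k f has_derivative frechet_derivative (partial k f) (at y)) (at y)"
    using frechet_derivative_works C3_D(2)[OF assms] by blast
  have e1: "(\<lambda>x. gradf f x \<bullet> b) = partial k f"
  proof
    fix x
    have "gradf f x \<bullet> b = gradf f x $ k" unfolding b by (rule cart_eq_inner_axis[symmetric])
    then show "gradf f x \<bullet> b = partial k f x" by (simp add: gradf_def)
  qed
  have e2: "(\<lambda>h. (hess f y *v h) \<bullet> b) = frechet_derivative (partial k f) (at y)"
  proof
    fix h
    have "(hess f y *v h) \<bullet> b = (hess f y *v h) $ k" unfolding b by (rule cart_eq_inner_axis[symmetric])
    also have "\<dots> = (\<Sum>m\<in>UNIV. hess f y $ k $ m * h $ m)"
      by (simp add: matrix_vector_mult_def)
    also have "\<dots> = (\<Sum>m\<in>UNIV. h $ m * partial m (partial k f) y)"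
    proof (rule sum.cong[OF refl])
      fix m
      have "hess f y $ k $ m = hess f y $ m $ k" by (rule hess_sym[OF assms])
      also have "\<dots> = partial m (partial k f) y" by (simp add: hess_def)
      finally show "hess f y $ k $ m * h $ m = h $ m * partial m (partial k f) y" by simp
    qed
    also have "\<dots> = frechet_derivative (partial k f) (at y) h"
      using fd_expand[of "partial k f" y h] C3_D(2)[OF assms] by simp
    finally show "(hess f y *v h) \<bullet> b = frechet_derivative (partial k f) (at y) h" .
  qed
  show "((\<lambda>x. gradf f x \<bullet> b) has_derivative (\<lambda>h. (hess f y *v h) \<bullet> b)) (at y within UNIV)"
    unfolding e1 e2 by (rule d)
qed

lemma coercive:
  fixes H :: "real^'n::finite^'n"
  assumes pd: "\<forall>z. z \<noteq> 0 \<longrightarrow> z \<bullet> (H *v z) > 0"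
  shows "\<exists>c>0. \<forall>z. c * (norm z)^2 \<le> z \<bullet> (H *v z)"
proof -
  have ne: "sphere (0::real^'n) 1 \<noteq> {}"
  proof -
    have "axis undefined 1 \<in> sphere (0::real^'n) 1" by simp
    then show ?thesis by blast
  qed
  have "continuous_on (sphere 0 1) (\<lambda>z::real^'n. z \<bullet> (H *v z))"
    by (intro continuous_on_inner continuous_on_id matrix_vector_mult_linear_continuous_on[unfolded o_def]
        continuous_on_compose2[OF matrix_vector_mult_linear_continuous_on continuous_on_id]) auto
  then obtain z0 where z0: "z0 \<in> sphere 0 1" and mn: "\<forall>y\<in>sphere 0 1. z0 \<bullet> (H *v z0) \<le> y \<bullet> (H *v y)"
    using continuous_attains_inf[OF compact_sphere ne] by blast
  define c where "c = z0 \<bullet> (H *v z0)"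
  have "z0 \<noteq> 0" using z0 by auto
  then have c: "c > 0" using pd unfolding c_def by blast
  show ?thesis
  proof (intro exI[of _ c] conjI c allI)
    fix z :: "real^'n"
    show "c * (norm z)^2 \<le> z \<bullet> (H *v z)"
    proof (cases "z = 0")
      case True then show ?thesis by simp
    next
      case False
      define u where "u = (1 / norm z) *\<^sub>R z"
      have "u \<in> sphere 0 1" using False by (simp add: u_def)
      then have cu: "c \<le> u \<bullet> (H *v u)" using mn unfolding c_def by blast
      have zu: "z = norm z *\<^sub>R u" using False by (simp add: u_def)
      have q: "z \<bullet> (H *v z) = (norm z)^2 * (u \<bullet> (H *v u))"
        by (subst (1 2) zu) (simp add: matrix_vector_mult_scaleR power2_eq_square)
      have "c * (norm z)^2 \<le> (u \<bullet> (H *v u)) * (norm z)^2"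
        using cu by (intro mult_right_mono) auto
      then show ?thesis using q by (simp add: mult.commute)
    qed
  qed
qed



lemma gE_line: "gE v d i (y + \<sigma> *\<^sub>R z) = gE v d i y + \<sigma> * (v i \<bullet> z)"
  by (simp add: gE_def inner_add_right)
lemma hI_line: "hI w e j (y + \<sigma> *\<^sub>R z) = hI w e j y + \<sigma> * (w j \<bullet> z)"
  by (simp add: hI_def inner_add_right)

lemma abs_sum_split:
  assumes zE: "\<forall>i\<in>ZE v d r y. gE v d i (y + \<sigma> *\<^sub>R z) = 0"
    and nE: "\<forall>i\<in>NE v d r y. gE v d i (y + \<sigma> *\<^sub>R z) < 0"
    and pE: "\<forall>i\<in>PE v d r y. gE v d i (y + \<sigma> *\<^sub>R z) > 0"
  shows "(\<Sum>i<r. \<bar>gE v d i (y + \<sigma> *\<^sub>R z)\<bar>)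
     = (\<Sum>i\<in>PE v d r y. gE v d i (y + \<sigma> *\<^sub>R z)) - (\<Sum>i\<in>NE v d r y. gE v d i (y + \<sigma> *\<^sub>R z))"
proof -
  let ?g = "\<lambda>i. gE v d i (y + \<sigma> *\<^sub>R z)"
  have "(\<Sum>i<r. \<bar>?g i\<bar>) = (\<Sum>i<r. (if i \<in> PE v d r y then ?g i else 0) - (if i \<in> NE v d r y then ?g i else 0))"
  proof (rule sum.cong[OF refl])
    fix i assume i: "i \<in> {..<r}"
    consider "gE v d i y < 0" | "gE v d i y = 0" | "gE v d i y > 0" by linarith
    then show "\<bar>?g i\<bar> = (if i \<in> PE v d r y then ?g i else 0) - (if i \<in> NE v d r y then ?g i else 0)"
    proof cases
      case 1 then have "i \<in> NE v d r y" "i \<notin> PE v d r y" using i by (auto simp: NE_def PE_def)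
      then show ?thesis using nE by force
    next
      case 2 then have "i \<in> ZE v d r y" "i \<notin> PE v d r y" "i \<notin> NE v d r y" using i by (auto simp: ZE_def NE_def PE_def)
      then show ?thesis using zE by force
    next
      case 3 then have "i \<in> PE v d r y" "i \<notin> NE v d r y" using i by (auto simp: NE_def PE_def)
      then show ?thesis using pE by force
    qed
  qed
  also have "\<dots> = (\<Sum>i<r. if i \<in> PE v d r y then ?g i else 0) - (\<Sum>i<r. if i \<in> NE v d r y then ?g i else 0)"
    by (rule sum_subtractf)
  also have "(\<Sum>i<r. if i \<in> PE v d r y then ?g i else 0) = (\<Sum>i\<in>PE v d r y. ?g i)"
  proof -
    have "PE v d r y = {i \<in> {..<r}. i \<in> PE v d r y}" by (auto simp: PE_def)
    then show ?thesis by (metis (no_types) finite_lessThan sum.inter_filter)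
  qed
  also have "(\<Sum>i<r. if i \<in> NE v d r y then ?g i else 0) = (\<Sum>i\<in>NE v d r y. ?g i)"
  proof -
    have "NE v d r y = {i \<in> {..<r}. i \<in> NE v d r y}" by (auto simp: NE_def)
    then show ?thesis by (metis (no_types) finite_lessThan sum.inter_filter)
  qed
  finally show ?thesis .
qed

lemma max_sum_split:
  assumes zI: "\<forall>j\<in>ZI w e s y. hI w e j (y + \<sigma> *\<^sub>R z) = 0"
    and nI: "\<forall>j\<in>NI w e s y. hI w e j (y + \<sigma> *\<^sub>R z) < 0"
    and pI: "\<forall>j\<in>PI' w e s y. hI w e j (y + \<sigma> *\<^sub>R z) > 0"
  shows "(\<Sum>j<s. max 0 (hI w e j (y + \<sigma> *\<^sub>R z))) = (\<Sum>j\<in>PI' w e s y. hI w e j (y + \<sigma> *\<^sub>R z))"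
proof -
  let ?h = "\<lambda>j. hI w e j (y + \<sigma> *\<^sub>R z)"
  have "(\<Sum>j<s. max 0 (?h j)) = (\<Sum>j<s. if j \<in> PI' w e s y then ?h j else 0)"
  proof (rule sum.cong[OF refl])
    fix j assume j: "j \<in> {..<s}"
    consider "hI w e j y < 0" | "hI w e j y = 0" | "hI w e j y > 0" by linarith
    then show "max 0 (?h j) = (if j \<in> PI' w e s y then ?h j else 0)"
    proof cases
      case 1 then have "j \<in> NI w e s y" "j \<notin> PI' w e s y" using j by (auto simp: NI_def PI'_def)
      then show ?thesis using nI by force
    next
      case 2 then have "j \<in> ZI w e s y" "j \<notin> PI' w e s y" using j by (auto simp: ZI_def PI'_def)
      then show ?thesis using zI by force
    next
      case 3 then have "j \<in> PI' w e s y" using j by (auto simp: PI'_def)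
      then show ?thesis using pI by force
    qed
  qed
  also have "\<dots> = (\<Sum>j\<in>PI' w e s y. ?h j)"
  proof -
    have "PI' w e s y = {j \<in> {..<s}. j \<in> PI' w e s y}" by (auto simp: PI'_def)
    then show ?thesis by (metis (no_types) finite_lessThan sum.inter_filter)
  qed
  finally show ?thesis .
qed

lemma stationary:
  fixes f :: "real^'n::finite \<Rightarrow> real"
  assumes C3: "C3 f"
    and minim: "\<forall>yy. penalty f v d r w e s t y \<le> penalty f v d r w e s t yy"
    and zK: "\<forall>a\<in>Zset v d r w e s y. urow v w a \<bullet> z = 0"
  shows "z \<bullet> gradf f y + t * (z \<bullet> ubar v d r w e s y) = 0"
proof -
  define \<phi> where "\<phi> \<sigma> = penalty f v d r w e s t (y + \<sigma> *\<^sub>R z)" for \<sigma>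
  define K0 where "K0 = (\<Sum>i\<in>PE v d r y. gE v d i y) - (\<Sum>i\<in>NE v d r y. gE v d i y) + (\<Sum>j\<in>PI' w e s y. hI w e j y)"
  define ub where "ub = ubar v d r w e s y"
  define \<psi> where "\<psi> \<sigma> = f (y + \<sigma> *\<^sub>R z) + t * (K0 + \<sigma> * (z \<bullet> ub))" for \<sigma>
  have zE: "\<forall>i\<in>ZE v d r y. v i \<bullet> z = 0"
  proof
    fix i assume "i \<in> ZE v d r y"
    then have "Inl i \<in> Zset v d r w e s y" by (simp add: Zset_def)
    then show "v i \<bullet> z = 0" using zK by force
  qed
  have zI: "\<forall>j\<in>ZI w e s y. w j \<bullet> z = 0"
  proof
    fix j assume "j \<in> ZI w e s y"
    then have "Inr j \<in> Zset v d r w e s y" by (simp add: Zset_def)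
    then show "w j \<bullet> z = 0" using zK by force
  qed
  have ub_z: "z \<bullet> ub = (\<Sum>i\<in>PE v d r y. v i \<bullet> z) - (\<Sum>i\<in>NE v d r y. v i \<bullet> z) + (\<Sum>j\<in>PI' w e s y. w j \<bullet> z)"
    unfolding ub_def ubar_def by (simp add: inner_add_right inner_diff_right inner_sum_right inner_commute)
  have eq: "\<phi> \<sigma> = \<psi> \<sigma>" if
      nE: "\<forall>i\<in>NE v d r y. gE v d i (y + \<sigma> *\<^sub>R z) < 0" and pE: "\<forall>i\<in>PE v d r y. gE v d i (y + \<sigma> *\<^sub>R z) > 0"
      and nI: "\<forall>j\<in>NI w e s y. hI w e j (y + \<sigma> *\<^sub>R z) < 0" and pI: "\<forall>j\<in>PI' w e s y. hI w e j (y + \<sigma> *\<^sub>R z) > 0"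
    for \<sigma>
  proof -
    have zE': "\<forall>i\<in>ZE v d r y. gE v d i (y + \<sigma> *\<^sub>R z) = 0"
      using zE by (simp add: gE_line ZE_def)
    have zI': "\<forall>j\<in>ZI w e s y. hI w e j (y + \<sigma> *\<^sub>R z) = 0"
      using zI by (simp add: hI_line ZI_def)
    have "\<phi> \<sigma> = f (y + \<sigma> *\<^sub>R z) + t * ((\<Sum>i\<in>PE v d r y. gE v d i (y + \<sigma> *\<^sub>R z)) - (\<Sum>i\<in>NE v d r y. gE v d i (y + \<sigma> *\<^sub>R z)))
        + t * (\<Sum>j\<in>PI' w e s y. hI w e j (y + \<sigma> *\<^sub>R z))"
      unfolding \<phi>_def penalty_def abs_sum_split[OF zE' nE pE] max_sum_split[OF zI' nI pI] ..
    also have "\<dots> = \<psi> \<sigma>"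
      unfolding \<psi>_def K0_def ub_z
      by (simp add: gE_line hI_line sum.distrib sum_distrib_left algebra_simps)
    finally show ?thesis .
  qed
  have cnd0: "(\<forall>i\<in>NE v d r y. gE v d i (y + 0 *\<^sub>R z) < 0) \<and> (\<forall>i\<in>PE v d r y. gE v d i (y + 0 *\<^sub>R z) > 0)
      \<and> (\<forall>j\<in>NI w e s y. hI w e j (y + 0 *\<^sub>R z) < 0) \<and> (\<forall>j\<in>PI' w e s y. hI w e j (y + 0 *\<^sub>R z) > 0)"
    by (simp add: NE_def PE_def NI_def PI'_def)
  have lim: "((\<lambda>\<sigma>. a + \<sigma> * b) \<longlongrightarrow> a) (at (0::real))" for a b :: real
  proof -
    have "((\<lambda>\<sigma>. a + \<sigma> * b) \<longlongrightarrow> a + 0 * b) (at (0::real))"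
      by (intro tendsto_intros)
    then show ?thesis by simp
  qed
  have ev: "eventually (\<lambda>\<sigma>. (\<forall>i\<in>NE v d r y. gE v d i (y + \<sigma> *\<^sub>R z) < 0) \<and> (\<forall>i\<in>PE v d r y. gE v d i (y + \<sigma> *\<^sub>R z) > 0)
      \<and> (\<forall>j\<in>NI w e s y. hI w e j (y + \<sigma> *\<^sub>R z) < 0) \<and> (\<forall>j\<in>PI' w e s y. hI w e j (y + \<sigma> *\<^sub>R z) > 0)) (at 0)"
  proof (intro eventually_conj eventually_ball_finite ballI)
    show "finite (NE v d r y)" "finite (PE v d r y)" "finite (NI w e s y)" "finite (PI' w e s y)"
      by (auto simp: NE_def PE_def NI_def PI'_def)
  next
    fix i assume "i \<in> NE v d r y"
    then show "eventually (\<lambda>\<sigma>. gE v d i (y + \<sigma> *\<^sub>R z) < 0) (at 0)"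
      unfolding gE_line by (intro order_tendstoD(2)[OF lim]) (simp add: NE_def)
  next
    fix i assume "i \<in> PE v d r y"
    then show "eventually (\<lambda>\<sigma>. gE v d i (y + \<sigma> *\<^sub>R z) > 0) (at 0)"
      unfolding gE_line by (intro order_tendstoD(1)[OF lim]) (simp add: PE_def)
  next
    fix j assume "j \<in> NI w e s y"
    then show "eventually (\<lambda>\<sigma>. hI w e j (y + \<sigma> *\<^sub>R z) < 0) (at 0)"
      unfolding hI_line by (intro order_tendstoD(2)[OF lim]) (simp add: NI_def)
  next
    fix j assume "j \<in> PI' w e s y"
    then show "eventually (\<lambda>\<sigma>. hI w e j (y + \<sigma> *\<^sub>R z) > 0) (at 0)"
      unfolding hI_line by (intro order_tendstoD(1)[OF lim]) (simp add: PI'_def)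
  qed
  then obtain dd where dd: "dd > 0" and ddP: "\<And>\<sigma>. \<sigma> \<noteq> 0 \<Longrightarrow> dist \<sigma> 0 < dd \<Longrightarrow>
      (\<forall>i\<in>NE v d r y. gE v d i (y + \<sigma> *\<^sub>R z) < 0) \<and> (\<forall>i\<in>PE v d r y. gE v d i (y + \<sigma> *\<^sub>R z) > 0)
      \<and> (\<forall>j\<in>NI w e s y. hI w e j (y + \<sigma> *\<^sub>R z) < 0) \<and> (\<forall>j\<in>PI' w e s y. hI w e j (y + \<sigma> *\<^sub>R z) > 0)"
    unfolding eventually_at by auto
  have psi0: "\<psi> 0 = \<phi> 0" using eq cnd0 by metis
  have locmin: "\<forall>\<sigma>. \<bar>0 - \<sigma>\<bar> < dd \<longrightarrow> \<psi> 0 \<le> \<psi> \<sigma>"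
  proof (intro allI impI)
    fix \<sigma> :: real assume h: "\<bar>0 - \<sigma>\<bar> < dd"
    show "\<psi> 0 \<le> \<psi> \<sigma>"
    proof (cases "\<sigma> = 0")
      case True then show ?thesis by simp
    next
      case False
      then have "\<psi> \<sigma> = \<phi> \<sigma>" using eq ddP[OF False] h by (simp add: dist_real_def)
      moreover have "\<phi> 0 \<le> \<phi> \<sigma>" unfolding \<phi>_def using minim by simp
      ultimately show ?thesis using psi0 by simp
    qed
  qed
  have d1: "((\<lambda>\<sigma>. f (y + \<sigma> *\<^sub>R z)) has_real_derivative z \<bullet> gradf f y) (at 0)"
    using line_deriv[of f y 0 z] C3_D(1)[OF C3] fd_grad[OF C3, of y z] by simp
  have d2: "((\<lambda>\<sigma>. t * (K0 + \<sigma> * (z \<bullet> ub))) has_real_derivative t * (z \<bullet> ub)) (at 0)"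
    by (auto intro!: derivative_eq_intros)
  have "(\<psi> has_real_derivative z \<bullet> gradf f y + t * (z \<bullet> ub)) (at 0)"
    unfolding \<psi>_def by (rule DERIV_add[OF d1 d2])
  from DERIV_local_min[OF this dd locmin] show ?thesis unfolding ub_def .
qed



context gset begin

definition "Pm = (\<chi> i j. P i j)"

lemma Pm_sum: "Pm *v w = (\<Sum>j\<in>UNIV. w $ j *\<^sub>R colP j)"
  by (simp add: vec_eq_iff matrix_vector_mult_def Pm_def colP_def mult.commute)

lemma Pm_K: "Kz (Pm *v w)"
  unfolding Kz_def Pm_sum by (simp add: inner_sum_right colP_K)

lemma Pm_eq: assumes z: "Kz z" shows "z \<bullet> (H *v (Pm *v w)) = z \<bullet> w"
proof -
  have "z \<bullet> (H *v (Pm *v w)) = (\<Sum>j\<in>UNIV. w $ j * (z \<bullet> (H *v colP j)))"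
    unfolding Pm_sum by (simp add: mv_sum matrix_vector_mult_scaleR inner_sum_right)
  also have "\<dots> = (\<Sum>j\<in>UNIV. w $ j * z $ j)" using colP_eq[OF z] by simp
  also have "\<dots> = z \<bullet> w" by (simp add: inner_vec_def mult.commute)
  finally show ?thesis .
qed

lemma Kz_sub: "subspace {z. Kz z}"
  unfolding subspace_def Kz_def by (simp add: inner_add_right)

end



lemma mv_neg: "(A::real^'n::finite^'m::finite) *v (- x) = - (A *v x)"
  by (simp add: vec_eq_iff matrix_vector_mult_def sum_negf)

locale prop3 =
  fixes f :: "real^'n::finite \<Rightarrow> real"
    and v w :: "nat \<Rightarrow> real^'n" and d e :: "nat \<Rightarrow> real" and r s :: nat
    and I :: "real set" and x :: "real \<Rightarrow> real^'n" and \<rho> :: real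
  assumes C3: "C3 f"
    and pd: "\<forall>y z. z \<noteq> 0 \<longrightarrow> z \<bullet> (hess f y *v z) > 0"
    and I: "open I" "is_interval I" "I \<noteq> {}" "I \<subseteq> {0<..}"
    and minimizer: "\<forall>t\<in>I. \<forall>y. penalty f v d r w e s t (x t) \<le> penalty f v d r w e s t y"
    and cont: "continuous_on I x"
    and const: "\<forall>t1\<in>I. \<forall>t2\<in>I.
         NE v d r (x t1) = NE v d r (x t2) \<and> ZE v d r (x t1) = ZE v d r (x t2)
       \<and> PE v d r (x t1) = PE v d r (x t2) \<and> NI w e s (x t1) = NI w e s (x t2)
       \<and> ZI w e s (x t1) = ZI w e s (x t2) \<and> PI' w e s (x t1) = PI' w e s (x t2)"
    and indep: "\<forall>t\<in>I. inj_on (urow v w) (Zset v d r w e s (x t))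
                  \<and> independent (urow v w ` Zset v d r w e s (x t))"
    and \<rho>: "\<rho> \<in> I"
begin

abbreviation "Zs \<equiv> Zset v d r w e s (x \<rho>)"
abbreviation "U \<equiv> urow v w"
abbreviation "u \<equiv> ubar v d r w e s (x \<rho>)"
abbreviation "Hf t \<equiv> hess f (x t)"
definition "Kset = {z. \<forall>a\<in>Zs. U a \<bullet> z = 0}"

lemma Z_const: "t \<in> I \<Longrightarrow> Zset v d r w e s (x t) = Zs"
  using const \<rho> unfolding Zset_def by metis

lemma finZ: "finite Zs"
proof -
  have "Zs \<subseteq> Inl ` {..<r} \<union> Inr ` {..<s}" by (auto simp: Zset_def ZE_def ZI_def)
  then show ?thesis by (rule finite_subset) auto
qed

lemma gs: "t \<in> I \<Longrightarrow> gset (Hf t) Zs U"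
  unfolding gset_def using hess_transpose[OF C3] pd finZ indep Z_const by metis

lemma Kset_eq: "gset.Kz Zs U z \<longleftrightarrow> z \<in> Kset"
  unfolding gset.Kz_def[OF gs[OF \<rho>]] Kset_def by simp

lemma Kset_sub: "subspace Kset"
  unfolding subspace_def Kset_def by (simp add: inner_add_right)

lemma Pmat_eq: "t \<in> I \<Longrightarrow> Pmat f v d r w e s (x t) = Pgen (Hf t) Zs U"
  using Z_const by (simp add: Pmat_def Pgen_def Ggen_def Ginv_def Let_def)
lemma Qmat_eq: "t \<in> I \<Longrightarrow> Qmat f v d r w e s (x t) = Qgen (Hf t) Zs U"
  using Z_const by (simp add: Qmat_def Qgen_def Ggen_def Ginv_def Let_def)
lemma Ginv_eq: "t \<in> I \<Longrightarrow> Ginv f v d r w e s (x t) = Ggen (Hf t) Zs U"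
  using Z_const by (simp add: Ggen_def Ginv_def Let_def)

lemma xK: "t \<in> I \<Longrightarrow> x t - x \<rho> \<in> Kset"
proof -
  assume t: "t \<in> I"
  have "U a \<bullet> x t = U a \<bullet> x \<rho>" if a: "a \<in> Zs" for a
  proof (cases a)
    case (Inl i)
    then have "i \<in> ZE v d r (x \<rho>)" "i \<in> ZE v d r (x t)" using a Z_const[OF t] by (auto simp: Zset_def)
    then show ?thesis using Inl by (simp add: ZE_def gE_def)
  next
    case (Inr j)
    then have "j \<in> ZI w e s (x \<rho>)" "j \<in> ZI w e s (x t)" using a Z_const[OF t] by (auto simp: Zset_def)
    then show ?thesis using Inr by (simp add: ZI_def hI_def)
  qed
  then show ?thesis unfolding Kset_def by (simp add: inner_diff_right)
qed

lemma stat: "\<forall>t\<in>I. \<forall>z\<in>Kset. z \<bullet> gradf f (x t) + t * (z \<bullet> u) = 0"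
proof (intro ballI)
  fix t z assume t: "t \<in> I" and z: "z \<in> Kset"
  have ub: "ubar v d r w e s (x t) = u"
    using const t \<rho> unfolding ubar_def by metis
  have "\<forall>a\<in>Zset v d r w e s (x t). U a \<bullet> z = 0" using z Z_const[OF t] unfolding Kset_def by simp
  from stationary[OF C3 _ this] minimizer t show "z \<bullet> gradf f (x t) + t * (z \<bullet> u) = 0"
    unfolding ub by blast
qed

lemma coer: obtains c where "c > 0" "\<forall>z. c * (norm z)^2 \<le> z \<bullet> (Hf \<rho> *v z)"
  using coercive[of "Hf \<rho>"] pd by blast

definition "P\<rho> = Pmat f v d r w e s (x \<rho>)"
definition "Q\<rho> = Qmat f v d r w e s (x \<rho>)"
definition "PM = (\<chi> i j. P\<rho> i j)"
definition "y0 = - (PM *v u)"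

lemma PM_eq: "PM = gset.Pm (Hf \<rho>) Zs U"
  unfolding PM_def gset.Pm_def[OF gs[OF \<rho>]] P\<rho>_def Pmat_eq[OF \<rho>] ..

lemma PM_K: "PM *v w' \<in> Kset"
  using gset.Pm_K[OF gs[OF \<rho>]] unfolding PM_eq Kset_eq .

lemma PM_H: "z \<in> Kset \<Longrightarrow> z \<bullet> (Hf \<rho> *v (PM *v w')) = z \<bullet> w'"
  using gset.Pm_eq[OF gs[OF \<rho>]] unfolding PM_eq Kset_eq by blast

lemma xder: "(x has_derivative (\<lambda>h. h *\<^sub>R y0)) (at \<rho>)"
proof -
  obtain c where c: "c > 0" "\<forall>z. c * (norm z)^2 \<le> z \<bullet> (Hf \<rho> *v z)" using coer by blast
  have ct: "continuous (at \<rho>) x"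
    using cont I(1) \<rho> continuous_on_eq_continuous_at by blast
  show ?thesis
  proof (rule x_deriv[OF I(1) \<rho> Kset_sub _ ct stat grad_deriv[OF C3] c(1)])
    show "\<forall>t\<in>I. x t - x \<rho> \<in> Kset" using xK by blast
    show "\<forall>z\<in>Kset. c * (norm z)^2 \<le> z \<bullet> (Hf \<rho> *v z)" using c by blast
    show "y0 \<in> Kset" unfolding y0_def using PM_K Kset_sub by (simp add: subspace_neg)
    show "\<forall>z\<in>Kset. z \<bullet> (Hf \<rho> *v y0) = - (z \<bullet> u)"
      unfolding y0_def using PM_H by (simp add: mv_neg)
  qed
qed

end


lemma mv_uminus_left: "(- (A::real^'n::finite^'m::finite)) *v x = - (A *v x)"
  by (simp add: vec_eq_iff matrix_vector_mult_def sum_negf)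

context prop3 begin

definition "Mp = (\<chi> k l. \<Sum>m\<in>UNIV. y0 $ m * partial m (partial k (partial l f)) (x \<rho>))"
definition "Pu m = (\<Sum>n\<in>UNIV. P\<rho> m n * u $ n)"
definition "dhc c = (\<Sum>m\<in>UNIV. DHess f (x \<rho>) c m * Pu m)"
definition "DHm = (\<chi> k l. dhc (l, k))"

lemma Hdot: "((\<lambda>t. Hf t $ k $ l) has_real_derivative Mp $ k $ l) (at \<rho>)"
proof -
  define F where "F = partial k (partial l f)"
  have Fd: "F differentiable at (x \<rho>)" unfolding F_def using C3_D(3)[OF C3] by blast
  have hF: "(F has_derivative frechet_derivative F (at (x \<rho>))) (at (x \<rho>))"
    using Fd frechet_derivative_works by blast
  have lin: "linear (frechet_derivative F (at (x \<rho>)))" using linear_frechet_derivative[OF Fd] .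
  have "((F \<circ> x) has_derivative (frechet_derivative F (at (x \<rho>)) \<circ> (\<lambda>h. h *\<^sub>R y0))) (at \<rho>)"
    by (rule diff_chain_at[OF xder hF])
  moreover have "(frechet_derivative F (at (x \<rho>)) \<circ> (\<lambda>h. h *\<^sub>R y0)) = (*) (Mp $ k $ l)"
  proof
    fix h
    have "(frechet_derivative F (at (x \<rho>)) \<circ> (\<lambda>h. h *\<^sub>R y0)) h = h * frechet_derivative F (at (x \<rho>)) y0"
      by (simp add: linear_scale[OF lin])
    also have "frechet_derivative F (at (x \<rho>)) y0 = Mp $ k $ l"
      using fd_expand[OF Fd, of y0] unfolding Mp_def F_def by simp
    finally show "(frechet_derivative F (at (x \<rho>)) \<circ> (\<lambda>h. h *\<^sub>R y0)) h = Mp $ k $ l * h" by simp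
  qed
  moreover have "F \<circ> x = (\<lambda>t. Hf t $ k $ l)" by (simp add: F_def hess_def fun_eq_iff)
  ultimately show ?thesis by (simp add: has_field_derivative_def)
qed

lemma Pu_y0: "Pu m = - y0 $ m"
  by (simp add: Pu_def y0_def PM_def matrix_vector_mult_def)

lemma Mp_DHm: "Mp = - DHm"
proof -
  have "Mp $ k $ l = - dhc (l, k)" for k l
  proof -
    have DH: "DHess f (x \<rho>) (l, k) m = partial m (partial k (partial l f)) (x \<rho>)" for m
    proof -
      have "(\<lambda>y. hess f y $ k $ l) = partial k (partial l f)" by (simp add: hess_def fun_eq_iff)
      then show ?thesis by (simp add: DHess_def)
    qed
    show ?thesis unfolding Mp_def dhc_def by (simp add: DH Pu_y0 sum_negf mult.commute)
  qed
  then show ?thesis by (simp add: vec_eq_iff DHm_def)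
qed

lemma Pder: "((\<lambda>t. Pmat f v d r w e s (x t) b a) has_real_derivative
     (\<Sum>k\<in>UNIV. P\<rho> b k * (\<Sum>l\<in>UNIV. dhc (l, k) * P\<rho> l a))) (at \<rho>)"
proof -
  obtain c where c: "c > 0" "\<forall>z. c * (norm z)^2 \<le> z \<bullet> (Hf \<rho> *v z)" using coer by blast
  define y where "y t = (\<chi> i. Pmat f v d r w e s (x t) i a)" for t
  define pa where "pa = y \<rho>"
  have yP: "y t = gset.colP (Hf t) Zs U a" if "t \<in> I" for t
    unfolding y_def gset.colP_def[OF gs[OF that]] Pmat_eq[OF that] ..
  have yK: "y t \<in> Kset" if t: "t \<in> I" for t
    using gset.colP_K[OF gs[OF t]] unfolding yP[OF t] Kset_def by blast
  have "(y has_derivative (\<lambda>h. h *\<^sub>R (PM *v (DHm *v pa)))) (at \<rho>)"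
  proof (rule solve_deriv[OF I(1) \<rho> Kset_sub, where b = "\<lambda>t. axis a 1" and b' = 0 and M' = Mp])
    show "\<forall>t\<in>I. y t - y \<rho> \<in> Kset" using yK \<rho> Kset_sub by (simp add: subspace_diff)
    show "\<forall>t\<in>I. \<forall>z\<in>Kset. z \<bullet> (Hf t *v y t) = z \<bullet> axis a 1"
    proof (intro ballI)
      fix t z assume t: "t \<in> I" and z: "z \<in> Kset"
      show "z \<bullet> (Hf t *v y t) = z \<bullet> axis a 1"
        using gset.colP_eq[OF gs[OF t]] z Kset_eq yP[OF t] by (simp flip: cart_eq_inner_axis)
    qed
    show "\<forall>i j. ((\<lambda>t. Hf t $ i $ j) has_real_derivative Mp $ i $ j) (at \<rho>)" using Hdot by blast
    show "\<forall>i. ((\<lambda>t. axis a 1 $ i) has_real_derivative (0::real^'n) $ i) (at \<rho>)" by simp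
    show "c > 0" by (rule c(1))
    show "\<forall>z\<in>Kset. c * (norm z)^2 \<le> z \<bullet> (Hf \<rho> *v z)" using c by blast
    show "PM *v (DHm *v pa) \<in> Kset" by (rule PM_K)
    show "\<forall>z\<in>Kset. z \<bullet> (Hf \<rho> *v (PM *v (DHm *v pa))) = z \<bullet> (0 - Mp *v y \<rho>)"
      using PM_H by (simp add: Mp_DHm pa_def mv_uminus_left)
  qed
  then have "((\<lambda>t. y t $ b) has_real_derivative (PM *v (DHm *v pa)) $ b) (at \<rho>)"
    by (rule vec_deriv_component)
  moreover have "(PM *v (DHm *v pa)) $ b = (\<Sum>k\<in>UNIV. P\<rho> b k * (\<Sum>l\<in>UNIV. dhc (l, k) * P\<rho> l a))"
    by (simp add: matrix_vector_mult_def PM_def DHm_def pa_def y_def P\<rho>_def)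
  ultimately show ?thesis by (simp add: y_def)
qed

end


context prop3 begin

definition "qv t a = (\<chi> i. Qmat f v d r w e s (x t) i a)"
definition "qd a = PM *v (DHm *v qv \<rho> a)"

lemma qvQ: "t \<in> I \<Longrightarrow> qv t a = gset.colQ (Hf t) Zs U a"
  unfolding qv_def gset.colQ_def[OF gs] Qmat_eq ..

lemma qd_K: "qd a \<in> Kset" unfolding qd_def by (rule PM_K)

lemma qv_der: assumes a: "a \<in> Zs" shows "((\<lambda>t. qv t a) has_derivative (\<lambda>h. h *\<^sub>R qd a)) (at \<rho>)"
proof -
  obtain c where c: "c > 0" "\<forall>z. c * (norm z)^2 \<le> z \<bullet> (Hf \<rho> *v z)" using coer by blast
  show ?thesis unfolding qd_def
  proof (rule solve_deriv[OF I(1) \<rho> Kset_sub, where b = "\<lambda>t. 0" and b' = 0 and M' = Mp])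
    show "\<forall>t\<in>I. qv t a - qv \<rho> a \<in> Kset"
    proof
      fix t assume t: "t \<in> I"
      have "U cc \<bullet> (qv t a - qv \<rho> a) = 0" if cc: "cc \<in> Zs" for cc
        using gset.colQ_U[OF gs[OF t] a cc] gset.colQ_U[OF gs[OF \<rho>] a cc] qvQ[OF t] qvQ[OF \<rho>]
        by (simp add: inner_diff_right)
      then show "qv t a - qv \<rho> a \<in> Kset" unfolding Kset_def by blast
    qed
    show "\<forall>t\<in>I. \<forall>z\<in>Kset. z \<bullet> (Hf t *v qv t a) = z \<bullet> 0"
    proof (intro ballI)
      fix t z assume t: "t \<in> I" and z: "z \<in> Kset"
      show "z \<bullet> (Hf t *v qv t a) = z \<bullet> 0"
        using gset.colQ_eq[OF gs[OF t]] z Kset_eq qvQ[OF t] by simp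
    qed
    show "\<forall>i j. ((\<lambda>t. Hf t $ i $ j) has_real_derivative Mp $ i $ j) (at \<rho>)" using Hdot by blast
    show "\<forall>i. ((\<lambda>t. (0::real^'n) $ i) has_real_derivative (0::real^'n) $ i) (at \<rho>)" by simp
    show "c > 0" by (rule c(1))
    show "\<forall>z\<in>Kset. c * (norm z)^2 \<le> z \<bullet> (Hf \<rho> *v z)" using c by blast
    show "PM *v (DHm *v qv \<rho> a) \<in> Kset" by (rule PM_K)
    show "\<forall>z\<in>Kset. z \<bullet> (Hf \<rho> *v (PM *v (DHm *v qv \<rho> a))) = z \<bullet> (0 - Mp *v qv \<rho> a)"
      using PM_H by (simp add: Mp_DHm mv_uminus_left)
  qed
qed

lemma Qder: "a \<in> Zs \<Longrightarrow> ((\<lambda>t. Qmat f v d r w e s (x t) i a) has_real_derivative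
     (\<Sum>k\<in>UNIV. P\<rho> i k * (\<Sum>l\<in>UNIV. dhc (l, k) * Q\<rho> l a))) (at \<rho>)"
proof -
  assume a: "a \<in> Zs"
  have "((\<lambda>t. qv t a $ i) has_real_derivative qd a $ i) (at \<rho>)"
    by (rule vec_deriv_component[OF qv_der[OF a]])
  moreover have "qd a $ i = (\<Sum>k\<in>UNIV. P\<rho> i k * (\<Sum>l\<in>UNIV. dhc (l, k) * Q\<rho> l a))"
    by (simp add: qd_def matrix_vector_mult_def PM_def DHm_def qv_def Q\<rho>_def)
  ultimately show ?thesis by (simp add: qv_def)
qed

lemma R_eq: "t \<in> I \<Longrightarrow> a \<in> Zs \<Longrightarrow> b \<in> Zs \<Longrightarrow> Rmat f v d r w e s (x t) b a =
   - (\<Sum>k\<in>UNIV. \<Sum>l\<in>UNIV. qv t b $ k * Hf t $ k $ l * qv t a $ l)"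
proof -
  assume t: "t \<in> I" and a: "a \<in> Zs" and b: "b \<in> Zs"
  have "(\<Sum>k\<in>UNIV. \<Sum>l\<in>UNIV. qv t b $ k * Hf t $ k $ l * qv t a $ l) = Ggen (Hf t) Zs U b a"
    using gset.QHQ[OF gs[OF t] a b] Qmat_eq[OF t] by (simp add: qv_def)
  then show ?thesis by (simp add: Rmat_def Ginv_eq[OF t])
qed

lemma Hsym_vec: "p \<bullet> (Hf \<rho> *v q) = q \<bullet> (Hf \<rho> *v p)"
  by (metis dot_lmul_matrix hess_transpose[OF C3] inner_commute transpose_matrix_vector)

lemma sum_quad: "(\<Sum>k\<in>UNIV. \<Sum>l\<in>UNIV. p $ k * (A::real^'n^'n) $ k $ l * q $ l) = p \<bullet> (A *v q)"
  by (simp add: inner_vec_def matrix_vector_mult_def sum_distrib_left mult_ac)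

lemma Rder: assumes a: "a \<in> Zs" and b: "b \<in> Zs"
  shows "((\<lambda>t. Rmat f v d r w e s (x t) b a) has_real_derivative
     (\<Sum>k\<in>UNIV. \<Sum>l\<in>UNIV. Q\<rho> k b * dhc (l, k) * Q\<rho> l a)) (at \<rho>)"
proof -
  have dq: "((\<lambda>t. qv t c $ k) has_real_derivative qd c $ k) (at \<rho>)" if "c \<in> Zs" for c k
    by (rule vec_deriv_component[OF qv_der[OF that]])
  have D: "((\<lambda>t. \<Sum>k\<in>UNIV. \<Sum>l\<in>UNIV. qv t b $ k * Hf t $ k $ l * qv t a $ l) has_real_derivative
     (\<Sum>k\<in>UNIV. \<Sum>l\<in>UNIV. qv \<rho> b $ k * Hf \<rho> $ k $ l * qd a $ l
         + (qv \<rho> b $ k * Mp $ k $ l + qd b $ k * Hf \<rho> $ k $ l) * qv \<rho> a $ l)) (at \<rho>)"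
    by (intro DERIV_sum DERIV_mult' dq a b Hdot)
  have z1: "(\<Sum>k\<in>UNIV. \<Sum>l\<in>UNIV. qv \<rho> b $ k * Hf \<rho> $ k $ l * qd a $ l) = 0"
  proof -
    have "(\<Sum>k\<in>UNIV. \<Sum>l\<in>UNIV. qv \<rho> b $ k * Hf \<rho> $ k $ l * qd a $ l) = qd a \<bullet> (Hf \<rho> *v qv \<rho> b)"
      by (simp add: sum_quad Hsym_vec)
    also have "\<dots> = 0" using gset.colQ_eq[OF gs[OF \<rho>]] qd_K Kset_eq qvQ[OF \<rho>] by simp
    finally show ?thesis .
  qed
  have z2: "(\<Sum>k\<in>UNIV. \<Sum>l\<in>UNIV. qd b $ k * Hf \<rho> $ k $ l * qv \<rho> a $ l) = 0"
  proof -
    have "(\<Sum>k\<in>UNIV. \<Sum>l\<in>UNIV. qd b $ k * Hf \<rho> $ k $ l * qv \<rho> a $ l) = qd b \<bullet> (Hf \<rho> *v qv \<rho> a)"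
      by (simp add: sum_quad)
    also have "\<dots> = 0" using gset.colQ_eq[OF gs[OF \<rho>]] qd_K Kset_eq qvQ[OF \<rho>] by simp
    finally show ?thesis .
  qed
  have val: "(\<Sum>k\<in>UNIV. \<Sum>l\<in>UNIV. qv \<rho> b $ k * Hf \<rho> $ k $ l * qd a $ l
         + (qv \<rho> b $ k * Mp $ k $ l + qd b $ k * Hf \<rho> $ k $ l) * qv \<rho> a $ l)
       = - (\<Sum>k\<in>UNIV. \<Sum>l\<in>UNIV. Q\<rho> k b * dhc (l, k) * Q\<rho> l a)"
  proof -
    have "(\<Sum>k\<in>UNIV. \<Sum>l\<in>UNIV. qv \<rho> b $ k * Hf \<rho> $ k $ l * qd a $ l
         + (qv \<rho> b $ k * Mp $ k $ l + qd b $ k * Hf \<rho> $ k $ l) * qv \<rho> a $ l)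
       = (\<Sum>k\<in>UNIV. \<Sum>l\<in>UNIV. qv \<rho> b $ k * Hf \<rho> $ k $ l * qd a $ l)
         + (\<Sum>k\<in>UNIV. \<Sum>l\<in>UNIV. qv \<rho> b $ k * Mp $ k $ l * qv \<rho> a $ l)
         + (\<Sum>k\<in>UNIV. \<Sum>l\<in>UNIV. qd b $ k * Hf \<rho> $ k $ l * qv \<rho> a $ l)"
      by (simp add: sum.distrib distrib_right)
    also have "\<dots> = (\<Sum>k\<in>UNIV. \<Sum>l\<in>UNIV. qv \<rho> b $ k * Mp $ k $ l * qv \<rho> a $ l)"
      using z1 z2 by simp
    also have "\<dots> = - (\<Sum>k\<in>UNIV. \<Sum>l\<in>UNIV. Q\<rho> k b * dhc (l, k) * Q\<rho> l a)"
      by (simp add: Mp_DHm DHm_def qv_def Q\<rho>_def sum_negf)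
    finally show ?thesis .
  qed
  have "((\<lambda>t. - (\<Sum>k\<in>UNIV. \<Sum>l\<in>UNIV. qv t b $ k * Hf t $ k $ l * qv t a $ l)) has_real_derivative
     (\<Sum>k\<in>UNIV. \<Sum>l\<in>UNIV. Q\<rho> k b * dhc (l, k) * Q\<rho> l a)) (at \<rho>)"
    using DERIV_minus[OF D] unfolding val by simp
  then show ?thesis
    by (rule has_field_derivative_transform_within_open[OF _ I(1) \<rho>]) (simp add: R_eq a b)
qed

end


lemma sum_pair_UNIV: "(\<Sum>c\<in>(UNIV::('a::finite \<times> 'b::finite) set). F c) = (\<Sum>l\<in>UNIV. \<Sum>k\<in>UNIV. F (l, k))"
  by (simp add: sum.cartesian_product)

theorem proposition3:
  fixes f :: "real^'n \<Rightarrow> real"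
    and v w :: "nat \<Rightarrow> real^'n" and d e :: "nat \<Rightarrow> real" and r s :: nat
    and I :: "real set" and x :: "real \<Rightarrow> real^'n" and \<rho> :: real
  assumes C3: "C3 f"
    and pd: "\<forall>y z. z \<noteq> 0 \<longrightarrow> z \<bullet> (hess f y *v z) > 0"
    and I: "open I" "is_interval I" "I \<noteq> {}" "I \<subseteq> {0<..}"
    and minimizer: "\<forall>t\<in>I. \<forall>y. penalty f v d r w e s t (x t) \<le> penalty f v d r w e s t y"
    and cont: "continuous_on I x"
    and const: "\<forall>t1\<in>I. \<forall>t2\<in>I.
         NE v d r (x t1) = NE v d r (x t2) \<and> ZE v d r (x t1) = ZE v d r (x t2)
       \<and> PE v d r (x t1) = PE v d r (x t2) \<and> NI w e s (x t1) = NI w e s (x t2)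
       \<and> ZI w e s (x t1) = ZI w e s (x t2) \<and> PI' w e s (x t1) = PI' w e s (x t2)"
    and indep: "\<forall>t\<in>I. inj_on (urow v w) (Zset v d r w e s (x t))
                  \<and> independent (urow v w ` Zset v d r w e s (x t))"
    and \<rho>: "\<rho> \<in> I"
  shows "let P = Pmat f v d r w e s (x \<rho>); Q = Qmat f v d r w e s (x \<rho>);
             Z = Zset v d r w e s (x \<rho>);
             Pu = (\<lambda>m. \<Sum>n\<in>UNIV. P m n * ubar v d r w e s (x \<rho>) $ n);
             dh = (\<lambda>c. \<Sum>m\<in>UNIV. DHess f (x \<rho>) c m * Pu m) in
     (\<forall>idx. ((\<lambda>t. vecm (Pmat f v d r w e s (x t)) idx)
              has_real_derivative (\<Sum>c\<in>UNIV. kron P P idx c * dh c)) (at \<rho>))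
   \<and> (\<forall>idx\<in>Z \<times> UNIV. ((\<lambda>t. vecm (Qmat f v d r w e s (x t)) idx)
              has_real_derivative (\<Sum>c\<in>UNIV. kron (transm Q) P idx c * dh c)) (at \<rho>))
   \<and> (\<forall>idx\<in>Z \<times> Z. ((\<lambda>t. vecm (Rmat f v d r w e s (x t)) idx)
              has_real_derivative (\<Sum>c\<in>UNIV. kron (transm Q) (transm Q) idx c * dh c)) (at \<rho>))"
proof -
  interpret p: prop3 f v w d e r s I x \<rho>
    by (rule prop3.intro[OF C3 pd I(1) I(2) I(3) I(4) minimizer cont const indep \<rho>])
  have Ps: "p.P\<rho> i j = p.P\<rho> j i" for i j
    using gset.P_sym[OF p.gs[OF \<rho>]] unfolding p.P\<rho>_def p.Pmat_eq[OF \<rho>] by blast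
  have dh: "(\<Sum>m\<in>UNIV. DHess f (x \<rho>) c m * (\<Sum>n\<in>UNIV. Pmat f v d r w e s (x \<rho>) m n * ubar v d r w e s (x \<rho>) $ n)) = p.dhc c" for c
    by (simp add: p.dhc_def p.Pu_def p.P\<rho>_def)
  have part1: "\<forall>idx. ((\<lambda>t. vecm (Pmat f v d r w e s (x t)) idx) has_real_derivative
      (\<Sum>c\<in>UNIV. kron p.P\<rho> p.P\<rho> idx c * p.dhc c)) (at \<rho>)"
  proof
    fix idx :: "'n \<times> 'n"
    obtain a b where idx: "idx = (a, b)" by (cases idx)
    have "(\<Sum>c\<in>UNIV. kron p.P\<rho> p.P\<rho> idx c * p.dhc c) = (\<Sum>l\<in>UNIV. \<Sum>k\<in>UNIV. p.P\<rho> a l * p.P\<rho> b k * p.dhc (l, k))"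
      by (simp add: idx kron_def sum_pair_UNIV)
    also have "\<dots> = (\<Sum>k\<in>UNIV. p.P\<rho> b k * (\<Sum>l\<in>UNIV. p.dhc (l, k) * p.P\<rho> l a))"
      by (subst sum.swap) (simp add: sum_distrib_left Ps[of a] mult_ac)
    finally show "((\<lambda>t. vecm (Pmat f v d r w e s (x t)) idx) has_real_derivative
      (\<Sum>c\<in>UNIV. kron p.P\<rho> p.P\<rho> idx c * p.dhc c)) (at \<rho>)"
      using p.Pder[of b a] by (simp add: idx vecm_def)
  qed
  have part2: "\<forall>idx\<in>Zset v d r w e s (x \<rho>) \<times> UNIV. ((\<lambda>t. vecm (Qmat f v d r w e s (x t)) idx) has_real_derivative
      (\<Sum>c\<in>UNIV. kron (transm p.Q\<rho>) p.P\<rho> idx c * p.dhc c)) (at \<rho>)"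
  proof
    fix idx assume "idx \<in> Zset v d r w e s (x \<rho>) \<times> (UNIV::'n set)"
    then obtain a i where idx: "idx = (a, i)" and a: "a \<in> Zset v d r w e s (x \<rho>)" by blast
    have "(\<Sum>c\<in>UNIV. kron (transm p.Q\<rho>) p.P\<rho> idx c * p.dhc c) = (\<Sum>l\<in>UNIV. \<Sum>k\<in>UNIV. p.Q\<rho> l a * p.P\<rho> i k * p.dhc (l, k))"
      by (simp add: idx kron_def transm_def sum_pair_UNIV)
    also have "\<dots> = (\<Sum>k\<in>UNIV. p.P\<rho> i k * (\<Sum>l\<in>UNIV. p.dhc (l, k) * p.Q\<rho> l a))"
      by (subst sum.swap) (simp add: sum_distrib_left mult_ac)
    finally show "((\<lambda>t. vecm (Qmat f v d r w e s (x t)) idx) has_real_derivative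
      (\<Sum>c\<in>UNIV. kron (transm p.Q\<rho>) p.P\<rho> idx c * p.dhc c)) (at \<rho>)"
      using p.Qder[OF a, of i] by (simp add: idx vecm_def)
  qed
  have part3: "\<forall>idx\<in>Zset v d r w e s (x \<rho>) \<times> Zset v d r w e s (x \<rho>). ((\<lambda>t. vecm (Rmat f v d r w e s (x t)) idx) has_real_derivative
      (\<Sum>c\<in>UNIV. kron (transm p.Q\<rho>) (transm p.Q\<rho>) idx c * p.dhc c)) (at \<rho>)"
  proof
    fix idx assume "idx \<in> Zset v d r w e s (x \<rho>) \<times> Zset v d r w e s (x \<rho>)"
    then obtain a b where idx: "idx = (a, b)" and a: "a \<in> Zset v d r w e s (x \<rho>)"
      and b: "b \<in> Zset v d r w e s (x \<rho>)" by blast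
    have "(\<Sum>c\<in>UNIV. kron (transm p.Q\<rho>) (transm p.Q\<rho>) idx c * p.dhc c) = (\<Sum>l\<in>UNIV. \<Sum>k\<in>UNIV. p.Q\<rho> l a * p.Q\<rho> k b * p.dhc (l, k))"
      by (simp add: idx kron_def transm_def sum_pair_UNIV)
    also have "\<dots> = (\<Sum>k\<in>UNIV. \<Sum>l\<in>UNIV. p.Q\<rho> k b * p.dhc (l, k) * p.Q\<rho> l a)"
      by (subst sum.swap) (simp add: mult_ac)
    finally show "((\<lambda>t. vecm (Rmat f v d r w e s (x t)) idx) has_real_derivative
      (\<Sum>c\<in>UNIV. kron (transm p.Q\<rho>) (transm p.Q\<rho>) idx c * p.dhc c)) (at \<rho>)"
      using p.Rder[OF a b] by (simp add: idx vecm_def)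
  qed
  show ?thesis
    unfolding Let_def using part1 part2 part3 by (simp add: p.P\<rho>_def p.Q\<rho>_def dh)
qed


end
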